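(* Let $\mathbb{U}$ be a compact Lie group and $\mathcal{A}\to X$ a real or complex locally trivial algebra bundle$_{\mathbb{U}}$ with finite-dimensional semisimple fibers over a paracompact Hausdorff base $X$. (1) There is a $\mathbb{U}$-invariant continuous section $e\in\Gamma(\mathcal{A}^{\otimes 2})$ such that for each $x\in X$, $e(x)\in\mathcal{A}_x\otimes\mathcal{A}_x$ is a separability idempotent of $\mathcal{A}_x$. (2) If moreover $\mathcal{A}$ is a bundle of $*$-algebras (with $\mathbb{U}$ acting by $*$-automorphisms), then $e$ as in (1) can be chosen so that additionally $e^*=\sigma(e)$, where $\sigma$ is the tensor flip $a\otimes b\mapsto b\otimes a$ and $(a\otimes b)^*:=a^*\otimes b^*$.
   Context: A separability idempotent of a finite-dimensional algebra $A$ is an element $e=\sum_k a_k\otimes b_k\in A\otimes A$ with $me=em$ for all $m\in A$ (using the $A$-bimodule structure $m(a\otimes b)=ma\otimes b$, $(a\otimes b)m=a\otimes bm$) and $\sum_k a_kb_k=1$. A locally trivial algebra bundle$_{\mathbb{U}}$ is a locally trivial bundle of finite-dimensional (unital) algebras, locally isomorphic to $U\times A$ for a fixed algebra $A$, with continuous $\mathbb{U}$-actions on total space and base making the projection equivariant and acting by algebra isomorphisms between fibers; $\mathcal{A}^{\otimes2}$ is the fiberwise tensor-square bundle with the induced $\mathbb{U}$-action. $\mathbb{U}$-invariance of $e$ means $\gamma\cdot e(x)=e(\gamma x)$. *)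

theory Defs
  imports "HOL-Analysis.Analysis"
begin

definition paracompact_space :: "'x topology \<Rightarrow> bool" where
  "paracompact_space X \<longleftrightarrow>
     (\<forall>\<U>. (\<forall>U\<in>\<U>. openin X U) \<and> topspace X \<subseteq> \<Union>\<U> \<longrightarrow>
        (\<exists>\<V>. (\<forall>V\<in>\<V>. openin X V) \<and> topspace X \<subseteq> \<Union>\<V> \<and>
              (\<forall>V\<in>\<V>. \<exists>U\<in>\<U>. V \<subseteq> U) \<and> locally_finite_in X \<V>))"

record 'g tgroup =
  gtop :: "'g topology"
  gmul :: "'g \<Rightarrow> 'g \<Rightarrow> 'g"
  ginv :: "'g \<Rightarrow> 'g"
  gone :: "'g"

definition topological_group :: "'g tgroup \<Rightarrow> bool" where
  "topological_group G \<longleftrightarrow>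
     gone G \<in> topspace (gtop G) \<and>
     (\<forall>a\<in>topspace (gtop G). \<forall>b\<in>topspace (gtop G). gmul G a b \<in> topspace (gtop G)) \<and>
     (\<forall>a\<in>topspace (gtop G). ginv G a \<in> topspace (gtop G)) \<and>
     (\<forall>a\<in>topspace (gtop G). \<forall>b\<in>topspace (gtop G). \<forall>c\<in>topspace (gtop G).
        gmul G (gmul G a b) c = gmul G a (gmul G b c)) \<and>
     (\<forall>a\<in>topspace (gtop G). gmul G (gone G) a = a \<and> gmul G a (gone G) = a) \<and>
     (\<forall>a\<in>topspace (gtop G). gmul G (ginv G a) a = gone G \<and> gmul G a (ginv G a) = gone G) \<and>
     continuous_map (prod_topology (gtop G) (gtop G)) (gtop G) (\<lambda>(a, b). gmul G a b) \<and>
     continuous_map (gtop G) (gtop G) (ginv G)"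

definition locally_euclidean :: "'g topology \<Rightarrow> bool" where
  "locally_euclidean T \<longleftrightarrow>
     (\<forall>g\<in>topspace T. \<exists>W n. openin T W \<and> g \<in> W \<and> subtopology T W homeomorphic_space Euclidean_space n)"

text \<open>A compact Lie group, rendered as a compact Hausdorff topological group that is a
  topological manifold.\<close>
definition compact_Lie_group :: "'g tgroup \<Rightarrow> bool" where
  "compact_Lie_group G \<longleftrightarrow>
     topological_group G \<and> Hausdorff_space (gtop G) \<and> compact_space (gtop G) \<and>
     locally_euclidean (gtop G)"

text \<open>The typical fibre is the algebra ('k^'n, tmul, tone); the fibre algebra operations
  on the total space are badd, bzero, bsmult, bmul, bone (bzero x, bone x lie in the fibre over x).\<close>
record ('g, 'x, 'e, 'k, 'n::finite) algbundle =
  bbase  :: "'x topology"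
  btotal :: "'e topology"
  bproj  :: "'e \<Rightarrow> 'x"
  badd   :: "'e \<Rightarrow> 'e \<Rightarrow> 'e"
  bzero  :: "'x \<Rightarrow> 'e"
  bsmult :: "'k \<Rightarrow> 'e \<Rightarrow> 'e"
  bmul   :: "'e \<Rightarrow> 'e \<Rightarrow> 'e"
  bone   :: "'x \<Rightarrow> 'e"
  tmul   :: "'k^'n \<Rightarrow> 'k^'n \<Rightarrow> 'k^'n"
  tone   :: "'k^'n"
  bactX  :: "'g \<Rightarrow> 'x \<Rightarrow> 'x"
  bactE  :: "'g \<Rightarrow> 'e \<Rightarrow> 'e"

definition fiberE :: "('g, 'x, 'e, 'k, 'n::finite) algbundle \<Rightarrow> 'x \<Rightarrow> 'e set" where
  "fiberE B x = {v \<in> topspace (btotal B). bproj B v = x}"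

definition typical_alg :: "('k::real_normed_field^'n \<Rightarrow> 'k^'n \<Rightarrow> 'k^'n) \<Rightarrow> 'k^'n \<Rightarrow> bool" where
  "typical_alg m u \<longleftrightarrow>
     (\<forall>a b c. m (a + b) c = m a c + m b c \<and> m a (b + c) = m a b + m a c) \<and>
     (\<forall>(s::'k) a b. m (s *s a) b = s *s m a b \<and> m a (s *s b) = s *s m a b) \<and>
     (\<forall>a b c. m (m a b) c = m a (m b c)) \<and>
     (\<forall>a. m u a = a \<and> m a u = a)"

definition local_triv ::
  "('g, 'x, 'e, 'k::real_normed_field, 'n::finite) algbundle \<Rightarrow> 'x set \<Rightarrow> ('e \<Rightarrow> 'k^'n) \<Rightarrow> bool" where
  "local_triv B W \<phi> \<longleftrightarrow>
     openin (bbase B) W \<and>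
     homeomorphic_map (subtopology (btotal B) {v \<in> topspace (btotal B). bproj B v \<in> W})
                      (prod_topology (subtopology (bbase B) W) euclidean)
                      (\<lambda>v. (bproj B v, \<phi> v)) \<and>
     (\<forall>x\<in>W. bzero B x \<in> fiberE B x \<and> \<phi> (bzero B x) = 0 \<and>
             bone B x \<in> fiberE B x \<and> \<phi> (bone B x) = tone B \<and>
       (\<forall>a\<in>fiberE B x. \<forall>b\<in>fiberE B x. \<forall>c.
          badd B a b \<in> fiberE B x \<and> \<phi> (badd B a b) = \<phi> a + \<phi> b \<and>
          bsmult B c a \<in> fiberE B x \<and> \<phi> (bsmult B c a) = c *s \<phi> a \<and>
          bmul B a b \<in> fiberE B x \<and> \<phi> (bmul B a b) = tmul B (\<phi> a) (\<phi> b)))"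

definition loc_triv_alg_bundle :: "('g, 'x, 'e, 'k::real_normed_field, 'n::finite) algbundle \<Rightarrow> bool" where
  "loc_triv_alg_bundle B \<longleftrightarrow>
     typical_alg (tmul B) (tone B) \<and>
     continuous_map (btotal B) (bbase B) (bproj B) \<and>
     (\<forall>x\<in>topspace (bbase B). \<exists>W \<phi>. x \<in> W \<and> local_triv B W \<phi>)"

definition bundle_action :: "'g tgroup \<Rightarrow> ('g, 'x, 'e, 'k, 'n::finite) algbundle \<Rightarrow> bool" where
  "bundle_action G B \<longleftrightarrow>
     (\<forall>g\<in>topspace (gtop G). \<forall>x\<in>topspace (bbase B). bactX B g x \<in> topspace (bbase B)) \<and>
     (\<forall>x\<in>topspace (bbase B). bactX B (gone G) x = x) \<and>
     (\<forall>g\<in>topspace (gtop G). \<forall>h\<in>topspace (gtop G). \<forall>x\<in>topspace (bbase B).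
        bactX B (gmul G g h) x = bactX B g (bactX B h x)) \<and>
     (\<forall>g\<in>topspace (gtop G). \<forall>v\<in>topspace (btotal B). bactE B g v \<in> topspace (btotal B)) \<and>
     (\<forall>v\<in>topspace (btotal B). bactE B (gone G) v = v) \<and>
     (\<forall>g\<in>topspace (gtop G). \<forall>h\<in>topspace (gtop G). \<forall>v\<in>topspace (btotal B).
        bactE B (gmul G g h) v = bactE B g (bactE B h v)) \<and>
     continuous_map (prod_topology (gtop G) (bbase B)) (bbase B) (\<lambda>(g, x). bactX B g x) \<and>
     continuous_map (prod_topology (gtop G) (btotal B)) (btotal B) (\<lambda>(g, v). bactE B g v) \<and>
     (\<forall>g\<in>topspace (gtop G). \<forall>v\<in>topspace (btotal B). bproj B (bactE B g v) = bactX B g (bproj B v)) \<and>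
     (\<forall>g\<in>topspace (gtop G). \<forall>x\<in>topspace (bbase B).
        bactE B g (bone B x) = bone B (bactX B g x) \<and>
        (\<forall>a\<in>fiberE B x. \<forall>b\<in>fiberE B x. \<forall>c.
           bactE B g (badd B a b) = badd B (bactE B g a) (bactE B g b) \<and>
           bactE B g (bsmult B c a) = bsmult B c (bactE B g a) \<and>
           bactE B g (bmul B a b) = bmul B (bactE B g a) (bactE B g b)))"

definition alg_bundle_U :: "'g tgroup \<Rightarrow> ('g, 'x, 'e, 'k::real_normed_field, 'n::finite) algbundle \<Rightarrow> bool" where
  "alg_bundle_U G B \<longleftrightarrow> loc_triv_alg_bundle B \<and> bundle_action G B"

definition fib_ideal :: "('g, 'x, 'e, 'k, 'n::finite) algbundle \<Rightarrow> 'x \<Rightarrow> 'e set \<Rightarrow> bool" where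
  "fib_ideal B x I \<longleftrightarrow>
     I \<subseteq> fiberE B x \<and> bzero B x \<in> I \<and>
     (\<forall>a\<in>I. \<forall>b\<in>I. badd B a b \<in> I) \<and> (\<forall>c. \<forall>a\<in>I. bsmult B c a \<in> I) \<and>
     (\<forall>s\<in>fiberE B x. \<forall>a\<in>I. bmul B s a \<in> I \<and> bmul B a s \<in> I)"

definition fib_nilpotent :: "('g, 'x, 'e, 'k, 'n::finite) algbundle \<Rightarrow> 'x \<Rightarrow> 'e set \<Rightarrow> bool" where
  "fib_nilpotent B x I \<longleftrightarrow>
     (\<exists>k\<ge>1. \<forall>as. length as = k \<and> set as \<subseteq> I \<longrightarrow> foldr (bmul B) as (bone B x) = bzero B x)"

text \<open>A finite-dimensional algebra is semisimple iff it has no nonzero nilpotent two-sided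
  ideal (equivalently, its Jacobson radical vanishes).\<close>
definition semisimple_fibers :: "('g, 'x, 'e, 'k, 'n::finite) algbundle \<Rightarrow> bool" where
  "semisimple_fibers B \<longleftrightarrow>
     (\<forall>x\<in>topspace (bbase B). \<forall>I. fib_ideal B x I \<and> fib_nilpotent B x I \<longrightarrow> I = {bzero B x})"

text \<open>A tensor sum_k a_k \<otimes> b_k in a fibre is represented by the list of pairs (a_k, b_k);
  under a local trivialization phi its coordinates in 'k^'n \<otimes> 'k^'n = 'k^'n^'n are
  sum_k phi(a_k) phi(b_k)^T.\<close>
definition outer :: "'k::real_normed_field^'n \<Rightarrow> 'k^'n \<Rightarrow> 'k^'n^'n" where
  "outer u v = (\<chi> i j. u $ i * v $ j)"

definition tcoord :: "('e \<Rightarrow> 'k::real_normed_field^'n) \<Rightarrow> ('e \<times> 'e) list \<Rightarrow> 'k^'n^'n" where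
  "tcoord \<phi> l = sum_list (map (\<lambda>(a, b). outer (\<phi> a) (\<phi> b)) l)"

definition tensor_in :: "('g, 'x, 'e, 'k, 'n::finite) algbundle \<Rightarrow> 'x \<Rightarrow> ('e \<times> 'e) list \<Rightarrow> bool" where
  "tensor_in B x l \<longleftrightarrow> (\<forall>(a, b)\<in>set l. a \<in> fiberE B x \<and> b \<in> fiberE B x)"

definition teq :: "('g, 'x, 'e, 'k::real_normed_field, 'n::finite) algbundle \<Rightarrow> 'x \<Rightarrow> ('e \<times> 'e) list \<Rightarrow> ('e \<times> 'e) list \<Rightarrow> bool" where
  "teq B x l1 l2 \<longleftrightarrow> (\<forall>W \<phi>. local_triv B W \<phi> \<and> x \<in> W \<longrightarrow> tcoord \<phi> l1 = tcoord \<phi> l2)"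

definition fsum :: "('g, 'x, 'e, 'k, 'n::finite) algbundle \<Rightarrow> 'x \<Rightarrow> 'e list \<Rightarrow> 'e" where
  "fsum B x l = foldr (badd B) l (bzero B x)"

definition sep_idempotent :: "('g, 'x, 'e, 'k::real_normed_field, 'n::finite) algbundle \<Rightarrow> 'x \<Rightarrow> ('e \<times> 'e) list \<Rightarrow> bool" where
  "sep_idempotent B x l \<longleftrightarrow>
     tensor_in B x l \<and>
     (\<forall>m\<in>fiberE B x. teq B x (map (\<lambda>(a, b). (bmul B m a, b)) l) (map (\<lambda>(a, b). (a, bmul B b m)) l)) \<and>
     fsum B x (map (\<lambda>(a, b). bmul B a b) l) = bone B x"

definition cont_tensor_section :: "('g, 'x, 'e, 'k::real_normed_field, 'n::finite) algbundle \<Rightarrow> ('x \<Rightarrow> ('e \<times> 'e) list) \<Rightarrow> bool" where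
  "cont_tensor_section B e \<longleftrightarrow>
     (\<forall>W \<phi>. local_triv B W \<phi> \<longrightarrow> continuous_map (subtopology (bbase B) W) euclidean (\<lambda>x. tcoord \<phi> (e x)))"

definition invariant_tensor_section :: "'g tgroup \<Rightarrow> ('g, 'x, 'e, 'k::real_normed_field, 'n::finite) algbundle \<Rightarrow> ('x \<Rightarrow> ('e \<times> 'e) list) \<Rightarrow> bool" where
  "invariant_tensor_section G B e \<longleftrightarrow>
     (\<forall>g\<in>topspace (gtop G). \<forall>x\<in>topspace (bbase B).
        teq B (bactX B g x) (map (\<lambda>(a, b). (bactE B g a, bactE B g b)) (e x)) (e (bactX B g x)))"

definition sep_section :: "'g tgroup \<Rightarrow> ('g, 'x, 'e, 'k::real_normed_field, 'n::finite) algbundle \<Rightarrow> ('x \<Rightarrow> ('e \<times> 'e) list) \<Rightarrow> bool" where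
  "sep_section G B e \<longleftrightarrow>
     cont_tensor_section B e \<and> invariant_tensor_section G B e \<and>
     (\<forall>x\<in>topspace (bbase B). sep_idempotent B x (e x))"

definition star_bundle_U :: "('k \<Rightarrow> 'k) \<Rightarrow> 'g tgroup \<Rightarrow> ('g, 'x, 'e, 'k, 'n::finite) algbundle \<Rightarrow> ('e \<Rightarrow> 'e) \<Rightarrow> bool" where
  "star_bundle_U cj G B st \<longleftrightarrow>
     continuous_map (btotal B) (btotal B) st \<and>
     (\<forall>x\<in>topspace (bbase B). \<forall>a\<in>fiberE B x. \<forall>b\<in>fiberE B x. \<forall>c.
        st a \<in> fiberE B x \<and> st (st a) = a \<and>
        st (badd B a b) = badd B (st a) (st b) \<and>
        st (bsmult B c a) = bsmult B (cj c) (st a) \<and>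
        st (bmul B a b) = bmul B (st b) (st a)) \<and>
     (\<forall>g\<in>topspace (gtop G). \<forall>v\<in>topspace (btotal B). bactE B g (st v) = st (bactE B g v))"

definition star_flip_section :: "('g, 'x, 'e, 'k::real_normed_field, 'n::finite) algbundle \<Rightarrow> ('e \<Rightarrow> 'e) \<Rightarrow> ('x \<Rightarrow> ('e \<times> 'e) list) \<Rightarrow> bool" where
  "star_flip_section B st e \<longleftrightarrow>
     (\<forall>x\<in>topspace (bbase B). teq B x (map (\<lambda>(a, b). (st a, st b)) (e x)) (map (\<lambda>(a, b). (b, a)) (e x)))"

end

theory Submission
  imports Defs
begin


lemma linear_vecI:
  fixes f :: "'k::field^'n \<Rightarrow> 'k^'m"
  assumes "\<And>x y. f (x + y) = f x + f y" "\<And>c x. f (c *s x) = c *s f x"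
  shows "Vector_Spaces.linear (*s) (*s) f"
  using assms by (simp add: Vector_Spaces.linear_iff vec.vector_space_axioms)

lemma trace_idem:
  fixes P :: "'k::field^'n \<Rightarrow> 'k^'n"
  assumes lin: "Vector_Spaces.linear (*s) (*s) P" and idem: "\<And>x. P (P x) = P x"
  shows "trace (matrix P) = of_nat (vec.dim (range P))"
proof -
  interpret lf: Vector_Spaces.linear "(*s)" "(*s)" P using lin .
  obtain S where S: "S \<subseteq> range P" "vec.independent S" "range P \<subseteq> vec.span S" "card S = vec.dim (range P)"
    using vec.basis_exists by blast
  have fin: "finite S" using S(2) vec.finiteI_independent by auto
  let ?r = "vec.representation S"
  have inspan: "P x \<in> vec.span S" for x using S(3) by auto
  have Pe: "P x = (\<Sum>b\<in>S. ?r (P x) b *s b)" for x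
    using vec.sum_representation_eq[OF S(2) inspan fin subset_refl] by simp
  have "trace (matrix P) = (\<Sum>j\<in>UNIV. P (axis j 1) $ j)" by (simp add: trace_def matrix_def)
  also have "\<dots> = (\<Sum>j\<in>UNIV. \<Sum>b\<in>S. ?r (P (axis j 1)) b * b $ j)"
    by (rule sum.cong[OF refl], subst Pe) simp
  also have "\<dots> = (\<Sum>b\<in>S. \<Sum>j\<in>UNIV. b $ j * ?r (P (axis j 1)) b)"
    by (subst sum.swap) (simp add: mult.commute)
  also have "\<dots> = (\<Sum>b\<in>S. 1)"
  proof (rule sum.cong[OF refl])
    fix b assume b: "b \<in> S"
    have "P b = P (\<Sum>j\<in>UNIV. b $ j *s axis j 1)" by (simp add: basis_expansion)
    also have "\<dots> = (\<Sum>j\<in>UNIV. b $ j *s P (axis j 1))" by (simp add: lf.sum lf.scale)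
    finally have "?r (P b) b = (\<Sum>j\<in>UNIV. ?r (b $ j *s P (axis j 1)) b)"
      using vec.representation_sum[OF S(2), of UNIV "\<lambda>j. b $ j *s P (axis j 1)"]
      by (simp add: vec.span_scale inspan)
    also have "\<dots> = (\<Sum>j\<in>UNIV. b $ j * ?r (P (axis j 1)) b)"
      by (simp add: vec.representation_scale[OF S(2) inspan])
    finally have 1: "?r (P b) b = (\<Sum>j\<in>UNIV. b $ j * ?r (P (axis j 1)) b)" .
    have "P b = b" using S(1) b idem by auto
    then have "?r (P b) b = 1" using vec.representation_basis[OF S(2) b] by simp
    then show "(\<Sum>j\<in>UNIV. b $ j * ?r (P (axis j 1)) b) = 1" using 1 by simp
  qed
  finally show ?thesis using S(4) by simp
qed

lemma trace_idem_zero: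
  fixes P :: "'k::field_char_0^'n \<Rightarrow> 'k^'n"
  assumes lin: "Vector_Spaces.linear (*s) (*s) P" and idem: "\<And>x. P (P x) = P x"
    and tr: "trace (matrix P) = 0"
  shows "P x = 0"
proof -
  have "vec.dim (range P) = 0" using trace_idem[OF lin idem] tr by simp
  then have "range P \<subseteq> {0}" by simp
  then show ?thesis by auto
qed


locale talg =
  fixes m :: "'k::real_normed_field^'n::finite \<Rightarrow> 'k^'n \<Rightarrow> 'k^'n" and one :: "'k^'n"
  assumes ta: "typical_alg m one"
begin

lemma addL: "m (a + b) c = m a c + m b c" and addR: "m a (b + c) = m a b + m a c"
  and smL: "m (s *s a) b = s *s m a b" and smR: "m a (s *s b) = s *s m a b"
  and assoc: "m (m a b) c = m a (m b c)" and oneL[simp]: "m one a = a" and oneR[simp]: "m a one = a"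
  using ta unfolding typical_alg_def by blast+

lemma linR: "Vector_Spaces.linear (*s) (*s) (m a)"
  by (rule linear_vecI) (simp_all add: addR smR)
lemma linL: "Vector_Spaces.linear (*s) (*s) (\<lambda>x. m x b)"
  by (rule linear_vecI) (simp_all add: addL smL)

lemma zeroL[simp]: "m 0 b = 0"
  using smL[of 0 0 b] by (simp only: vector_smult_lzero)
lemma zeroR[simp]: "m a 0 = 0"
  using smR[of a 0 0] by (simp only: vector_smult_lzero)
lemma negL: "m (- a) b = - m a b"
proof - have "m a b + m (- a) b = 0" using addL[of a "-a" b] by simp
  then show ?thesis by (simp add: add_eq_0_iff) qed
lemma negR: "m a (- b) = - m a b"
proof - have "m a b + m a (- b) = 0" using addR[of a b "-b"] by simp
  then show ?thesis by (simp add: add_eq_0_iff) qed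
lemma diffL: "m (a - b) c = m a c - m b c" using addL[of a "-b" c] by (simp add: negL)
lemma diffR: "m a (b - c) = m a b - m a c" using addR[of a b "-c"] by (simp add: negR)
lemma sumL: "m (sum f S) b = (\<Sum>i\<in>S. m (f i) b)"
  by (induction S rule: infinite_finite_induct) (simp_all add: addL)
lemma sumR: "m a (sum f S) = (\<Sum>i\<in>S. m a (f i))"
  by (induction S rule: infinite_finite_induct) (simp_all add: addR)

definition L :: "'k^'n \<Rightarrow> 'k^'n^'n" where "L a = matrix (m a)"
definition tr :: "'k^'n \<Rightarrow> 'k" where "tr a = trace (L a)"
definition Bf :: "'k^'n \<Rightarrow> 'k^'n \<Rightarrow> 'k" where "Bf a b = tr (m a b)"

lemma L_mv: "L a *v x = m a x" by (simp add: L_def matrix_works[OF linR])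
lemma L_mult: "L (m a b) = L a ** L b"
proof -
  have "m (m a b) = m a o m b" by (auto simp: assoc)
  then show ?thesis by (simp add: L_def matrix_compose_gen[OF linR linR])
qed
lemma tr_expl: "tr a = (\<Sum>j\<in>UNIV. m a (axis j 1) $ j)"
  by (simp add: tr_def L_def trace_def matrix_def)
lemma tr_add: "tr (a + b) = tr a + tr b" by (simp add: tr_expl addL sum.distrib)
lemma tr_smult: "tr (c *s a) = c * tr a" by (simp add: tr_expl smL sum_distrib_left)
lemma tr_zero[simp]: "tr 0 = 0" by (simp add: tr_expl)
lemma tr_neg: "tr (- a) = - tr a" by (simp add: tr_expl negL sum_negf)
lemma tr_diff: "tr (a - b) = tr a - tr b" using tr_add[of a "-b"] by (simp add: tr_neg)
lemma tr_sum: "tr (sum f S) = (\<Sum>i\<in>S. tr (f i))"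
  by (induction S rule: infinite_finite_induct) (simp_all add: tr_add)
lemma tr_comm: "tr (m a b) = tr (m b a)" unfolding tr_def L_mult by (rule trace_mul_sym)

lemma Bf_sym: "Bf a b = Bf b a" by (simp add: Bf_def tr_comm)
lemma Bf_assoc: "Bf (m a b) c = Bf a (m b c)" by (simp add: Bf_def assoc)
lemma Bf_addL: "Bf (a + b) c = Bf a c + Bf b c" by (simp add: Bf_def addL tr_add)
lemma Bf_addR: "Bf a (b + c) = Bf a b + Bf a c" by (simp add: Bf_def addR tr_add)
lemma Bf_smL: "Bf (s *s a) b = s * Bf a b" by (simp add: Bf_def smL tr_smult)
lemma Bf_smR: "Bf a (s *s b) = s * Bf a b" by (simp add: Bf_def smR tr_smult)
lemma Bf_sumL: "Bf (sum f S) b = (\<Sum>i\<in>S. Bf (f i) b)" by (simp add: Bf_def sumL tr_sum)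
lemma Bf_sumR: "Bf a (sum f S) = (\<Sum>i\<in>S. Bf a (f i))" by (simp add: Bf_def sumR tr_sum)
lemma Bf_oneR: "Bf a one = tr a" by (simp add: Bf_def)

lemma Bf_expandL: "Bf x y = (\<Sum>k\<in>UNIV. x $ k * Bf (axis k 1) y)"
proof -
  have "Bf x y = Bf (\<Sum>k\<in>UNIV. x $ k *s axis k 1) y"
    by (simp add: basis_expansion)
  also have "\<dots> = (\<Sum>k\<in>UNIV. x $ k * Bf (axis k 1) y)"
    by (simp add: Bf_sumL Bf_smL)
  finally show ?thesis .
qed

primrec pw :: "'k^'n \<Rightarrow> nat \<Rightarrow> 'k^'n" where
  "pw a 0 = one" | "pw a (Suc k) = m a (pw a k)"

lemma pw_add: "m (pw a i) (pw a j) = pw a (i + j)"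
  by (induction i) (simp_all add: assoc)

lemma pw_one[simp]: "pw a 1 = a" by simp

end


lemma chain_stab:
  fixes S :: "nat \<Rightarrow> ('k::field^'n) set"
  assumes sub: "\<And>i. vec.subspace (S i)" and dec: "\<And>i. S (Suc i) \<subseteq> S i"
  shows "\<exists>N. S (Suc N) = S N"
proof (rule ccontr)
  assume "\<not> ?thesis"
  then have ne: "S (Suc i) \<noteq> S i" for i by auto
  have lt: "vec.dim (S (Suc i)) < vec.dim (S i)" for i
  proof -
    have sp: "vec.span (S j) = S j" for j using sub[of j] by (simp add: vec.span_eq_iff)
    have "vec.span (S (Suc i)) \<subset> vec.span (S i)"
      unfolding sp using dec[of i] ne[of i] by blast
    then show ?thesis by (rule vec.dim_psubset)
  qed
  have "vec.dim (S i) + i \<le> vec.dim (S 0)" for i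
  proof (induction i)
    case (Suc i) then show ?case using lt[of i] by simp
  qed simp
  from this[of "Suc (vec.dim (S 0))"] show False by simp
qed

context talg begin

definition rad :: "('k^'n) set" where "rad = {a. \<forall>b. Bf a b = 0}"

lemma Bf_zeroL[simp]: "Bf 0 b = 0" by (simp add: Bf_def)

lemma rad_sub: "vec.subspace rad"
  by (rule vec.subspaceI) (auto simp: rad_def Bf_addL Bf_smL)

lemma rad_multL: "a \<in> rad \<Longrightarrow> m s a \<in> rad"
proof -
  assume a: "a \<in> rad"
  have "Bf (m s a) b = Bf a (m b s)" for b
  proof -
    have "Bf (m s a) b = tr (m s (m a b))" by (simp add: Bf_def assoc)
    also have "\<dots> = tr (m (m a b) s)" by (rule tr_comm)
    also have "\<dots> = Bf a (m b s)" by (simp add: Bf_def assoc)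
    finally show ?thesis .
  qed
  then show ?thesis using a by (simp add: rad_def)
qed

lemma rad_multR: "a \<in> rad \<Longrightarrow> m a s \<in> rad"
  by (simp add: rad_def Bf_assoc)

lemma rad_tr: "a \<in> rad \<Longrightarrow> tr a = 0"
  using Bf_oneR[of a] by (simp add: rad_def)

lemma rad_pw: "a \<in> rad \<Longrightarrow> pw a (Suc k) \<in> rad"
  by (simp add: rad_multR)

lemma rad_idem: "f \<in> rad \<Longrightarrow> m f f = f \<Longrightarrow> f = 0"
proof -
  assume f: "f \<in> rad" "m f f = f"
  have "m f x = 0" for x
  proof (rule trace_idem_zero[OF linR])
    show "m f (m f x) = m f x" for x using f by (simp flip: assoc)
    show "trace (matrix (m f)) = 0" using rad_tr[OF f(1)] by (simp add: tr_def L_def)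
  qed
  from this[of one] show ?thesis by simp
qed

definition Cs :: "'k^'n \<Rightarrow> ('k^'n) set" where "Cs a = vec.span (range (pw a))"

lemma Cs_pw: "pw a i \<in> Cs a" by (simp add: Cs_def vec.span_base)

lemma Cs_mult_pw: "q \<in> Cs a \<Longrightarrow> m (pw a i) q \<in> Cs a \<and> m (pw a i) q = m q (pw a i)"
  unfolding Cs_def
proof (induction rule: vec.span_induct_alt)
  case base then show ?case by (simp add: vec.span_zero)
next
  case (step c x y)
  then obtain j where x: "x = pw a j" by auto
  have 1: "m (pw a i) (c *s x + y) = c *s pw a (i + j) + m (pw a i) y"
    by (simp add: addR smR x pw_add)
  have 2: "m (c *s x + y) (pw a i) = c *s pw a (i + j) + m y (pw a i)"
    by (simp add: addL smL x pw_add add.commute)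
  have "pw a (i + j) \<in> vec.span (range (pw a))" by (rule vec.span_base) simp
  then have mem: "c *s pw a (i + j) + m (pw a i) y \<in> vec.span (range (pw a))"
    using step.IH vec.span_add vec.span_scale by blast
  show ?case unfolding 1 2 using mem step.IH by simp
qed

lemma Cs_mult: "p \<in> Cs a \<Longrightarrow> q \<in> Cs a \<Longrightarrow> m p q \<in> Cs a \<and> m p q = m q p"
proof -
  assume p: "p \<in> Cs a" and q: "q \<in> Cs a"
  from p show ?thesis unfolding Cs_def
  proof (induction rule: vec.span_induct_alt)
    case base then show ?case by (simp add: vec.span_zero)
  next
    case (step c x y)
    then obtain j where x: "x = pw a j" by auto
    have 1: "m (c *s x + y) q = c *s m (pw a j) q + m y q" by (simp add: addL smL x)
    have 2: "m q (c *s x + y) = c *s m q (pw a j) + m q y" by (simp add: addR smR x)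
    have mem: "c *s m (pw a j) q + m y q \<in> vec.span (range (pw a))"
      using step.IH Cs_mult_pw[OF q, of j] unfolding Cs_def by (auto intro!: vec.span_add vec.span_scale)
    show ?case unfolding 1 2 using mem step.IH Cs_mult_pw[OF q, of j] unfolding Cs_def by simp
  qed
qed

lemma Cs_pw_closed: "p \<in> Cs a \<Longrightarrow> pw p k \<in> Cs a"
proof (induction k)
  case 0 then show ?case using Cs_pw[of a 0] by simp
next
  case (Suc k) then show ?case using Cs_mult by simp
qed

lemma pw_mult_Cs: "p \<in> Cs a \<Longrightarrow> q \<in> Cs a \<Longrightarrow> pw (m p q) k = m (pw p k) (pw q k)"
proof (induction k)
  case 0 then show ?case by simp
next
  case (Suc k)
  let ?P = "pw p k" and ?Q = "pw q k"
  have P: "?P \<in> Cs a" and Q: "?Q \<in> Cs a" using Suc.prems Cs_pw_closed by auto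
  have "pw (m p q) (Suc k) = m (m p q) (m ?P ?Q)" using Suc by simp
  also have "\<dots> = m p (m (m q ?P) ?Q)" by (simp add: assoc)
  also have "\<dots> = m p (m (m ?P q) ?Q)" using Cs_mult[OF Suc.prems(2) P] by simp
  also have "\<dots> = m (m p ?P) (m q ?Q)" by (simp add: assoc)
  finally show ?case by simp
qed

lemma rad_nil: "a \<in> rad \<Longrightarrow> \<exists>M. pw a M = 0"
proof -
  assume a: "a \<in> rad"
  define D where "D i = vec.span (range (\<lambda>j. pw a (i + j)))" for i
  have "\<exists>N. D (Suc N) = D N"
  proof (rule chain_stab)
    show "vec.subspace (D i)" for i by (simp add: D_def)
    show "D (Suc i) \<subseteq> D i" for i unfolding D_def
    proof (rule vec.span_mono, clarify)
      fix j show "pw a (Suc i + j) \<in> range (\<lambda>j. pw a (i + j))"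
        by (rule range_eqI[of _ _ "Suc j"]) simp
    qed
  qed
  then obtain N where N: "D (Suc N) = D N" by blast
  define Cp where "Cp = vec.span (range (\<lambda>j. pw a (Suc j)))"
  have "pw a N \<in> D N" unfolding D_def by (rule vec.span_base) (rule range_eqI[of _ _ 0], simp)
  then have "pw a N \<in> D (Suc N)" using N by simp
  moreover have "D (Suc N) = m (pw a N) ` Cp"
  proof -
    interpret lm: Vector_Spaces.linear "(*s)" "(*s)" "m (pw a N)" by (rule linR)
    have "(\<lambda>j. pw a (Suc N + j)) = (\<lambda>j. m (pw a N) (pw a (Suc j)))"
      by (simp only: pw_add) simp
    then have "range (\<lambda>j. pw a (Suc N + j)) = m (pw a N) ` range (\<lambda>j. pw a (Suc j))"
      by (simp only: image_image)
    then show ?thesis unfolding D_def Cp_def by (simp add: lm.span_image)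
  qed
  ultimately obtain z where z: "z \<in> Cp" "pw a N = m (pw a N) z" by auto
  have "Cp \<subseteq> rad" unfolding Cp_def
    by (rule vec.span_minimal[OF _ rad_sub]) (auto intro: rad_multR[OF a])
  with z have zr: "z \<in> rad" by auto
  have "Cp = m a ` Cs a"
  proof -
    interpret lm: Vector_Spaces.linear "(*s)" "(*s)" "m a" by (rule linR)
    have "range (\<lambda>j. pw a (Suc j)) = m a ` range (pw a)" by (simp only: image_image pw.simps)
    then show ?thesis unfolding Cs_def Cp_def by (simp add: lm.span_image)
  qed
  with z obtain p where p: "p \<in> Cs a" "z = m a p" by auto
  have aC: "a \<in> Cs a" using Cs_pw[of a 1] by simp
  have zC: "z \<in> Cs a" using Cs_mult[OF aC p(1)] p(2) by blast
  define M where "M = Suc N"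
  define x where "x = pw a M"
  have xz: "x = m x z" unfolding x_def M_def using z(2) by (metis assoc pw.simps(2))
  have xC: "x \<in> Cs a" unfolding x_def by (rule Cs_pw)
  define f where "f = pw z M"
  have fC: "f \<in> Cs a" unfolding f_def by (rule Cs_pw_closed[OF zC])
  have fr: "f \<in> rad" unfolding f_def M_def by (rule rad_pw[OF zr])
  have xf: "m x (pw z k) = x" for k
  proof (induction k)
    case (Suc k) then show ?case by (metis assoc pw.simps(2) xz)
  qed simp
  define Q where "Q = pw p M"
  have QC: "Q \<in> Cs a" unfolding Q_def by (rule Cs_pw_closed[OF p(1)])
  have fxQ: "f = m x Q" unfolding f_def x_def Q_def p(2) by (rule pw_mult_Cs[OF aC p(1)])
  have "m f f = m x (m Q f)" by (simp add: fxQ assoc)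
  also have "\<dots> = m x (m f Q)" using Cs_mult[OF QC fC] by simp
  also have "\<dots> = m (m x f) Q" by (simp add: assoc)
  also have "\<dots> = f" by (metis xf f_def fxQ)
  finally have "f = 0" using rad_idem[OF fr] by simp
  then have "x = 0" using xf[of M] f_def by simp
  then show ?thesis unfolding x_def by blast
qed

end


context talg begin

lemma key_nil:
  assumes Rsub: "vec.subspace R" and Rmul: "\<And>r s. r \<in> R \<Longrightarrow> s \<in> R \<Longrightarrow> m r s \<in> R"
    and Rnil: "\<And>r. r \<in> R \<Longrightarrow> \<exists>M. pw r M = 0"
    and Usub: "vec.subspace U" and Uinv: "\<And>r v. r \<in> R \<Longrightarrow> v \<in> U \<Longrightarrow> m r v \<in> U"
    and Uspan: "U \<subseteq> vec.span {m r v | r v. r \<in> R \<and> v \<in> U}"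
  shows "U \<subseteq> {0}"
proof (rule ccontr)
  assume nz: "\<not> U \<subseteq> {0}"
  define P where "P W \<longleftrightarrow> vec.subspace W \<and> W \<subseteq> U \<and> W \<noteq> U \<and> (\<forall>r\<in>R. \<forall>v\<in>W. m r v \<in> W)" for W
  have P0: "P {0}" unfolding P_def using nz Usub vec.subspace_0 by auto
  have ex: "\<exists>W. P W \<and> vec.dim W = 0" using P0 by (intro exI[of _ "{0}"]) simp
  have bnd: "\<forall>y. (\<exists>W. P W \<and> vec.dim W = y) \<longrightarrow> y \<le> CARD('n)"
      using vec.dim_subset[of _ UNIV] vec_dim_card by (metis subset_UNIV)
  from Nat.ex_has_greatest_nat[OF ex bnd] obtain U1 where U1: "P U1" and max: "\<And>W. P W \<Longrightarrow> vec.dim W \<le> vec.dim U1" by blast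
  have maxeq: "W = U1" if "P W" "U1 \<subseteq> W" for W
    using vec.subspace_dim_equal[of U1 W] that max[OF that(1)] U1 unfolding P_def by auto
  define T where "T = {v \<in> U. \<forall>r\<in>R. m r v \<in> U1}"
  have U1sub: "vec.subspace U1" and U1U: "U1 \<subseteq> U" and U1ne: "U1 \<noteq> U"
    and U1inv: "\<And>r v. r \<in> R \<Longrightarrow> v \<in> U1 \<Longrightarrow> m r v \<in> U1" using U1 unfolding P_def by auto
  have PT: "P T" unfolding P_def
  proof (intro conjI ballI)
    show "vec.subspace T" unfolding T_def
      by (rule vec.subspaceI) (auto simp: addR smR vec.subspace_0[OF Usub] vec.subspace_0[OF U1sub]
          vec.subspace_add[OF Usub] vec.subspace_add[OF U1sub] vec.subspace_scale[OF Usub] vec.subspace_scale[OF U1sub])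
    show "T \<subseteq> U" unfolding T_def by auto
    show "T \<noteq> U"
    proof
      assume "T = U"
      then have "{m r v | r v. r \<in> R \<and> v \<in> U} \<subseteq> U1" unfolding T_def by auto
      then have "vec.span {m r v | r v. r \<in> R \<and> v \<in> U} \<subseteq> U1" by (rule vec.span_minimal[OF _ U1sub])
      then show False using Uspan U1U U1ne by auto
    qed
    show "m r v \<in> T" if "r \<in> R" "v \<in> T" for r v
      using that Uinv Rmul unfolding T_def by (auto simp flip: assoc)
  qed
  have "U1 \<subseteq> T" unfolding T_def using U1U U1inv by auto
  then have TU1: "T = U1" using maxeq[OF PT] by simp
  obtain u where u: "u \<in> U" "u \<notin> U1" using U1U U1ne by auto
  then obtain r0 where r0: "r0 \<in> R" "m r0 u \<notin> U1" using TU1 unfolding T_def by auto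
  define S where "S = {w + m r u | w r. w \<in> U1 \<and> r \<in> R}"
  have U1S: "U1 \<subseteq> S" unfolding S_def
  proof
    fix w assume "w \<in> U1"
    moreover have "w = w + m 0 u" by simp
    ultimately show "w \<in> {w + m r u | w r. w \<in> U1 \<and> r \<in> R}"
      using vec.subspace_0[OF Rsub] by blast
  qed
  have memS: "x \<in> S" if "w \<in> U1" "r \<in> R" "x = w + m r u" for x w r
    using that unfolding S_def by blast
  have "m r0 u \<in> S" using r0 vec.subspace_0[OF U1sub] by (intro memS[of 0 r0]) auto
  then have SU1: "S \<noteq> U1" using r0 by auto
  have Ssub: "vec.subspace S"
  proof (rule vec.subspaceI)
    show "0 \<in> S" using U1S vec.subspace_0[OF U1sub] by auto
    show "x + y \<in> S" if xS: "x \<in> S" and yS: "y \<in> S" for x y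
    proof -
      obtain w1 r1 where "x = w1 + m r1 u" "w1 \<in> U1" "r1 \<in> R"
        using xS unfolding S_def by blast
      moreover obtain w2 r2 where "y = w2 + m r2 u" "w2 \<in> U1" "r2 \<in> R"
        using yS unfolding S_def by blast
      ultimately show ?thesis
        by (intro memS[of "w1 + w2" "r1 + r2"]) (auto simp: addL
            vec.subspace_add[OF U1sub] vec.subspace_add[OF Rsub])
    qed
    show "c *s x \<in> S" if xS: "x \<in> S" for c x
    proof -
      obtain w1 r1 where "x = w1 + m r1 u" "w1 \<in> U1" "r1 \<in> R"
        using xS unfolding S_def by blast
      then show ?thesis
        by (intro memS[of "c *s w1" "c *s r1"]) (auto simp: smL
            vec.subspace_scale[OF U1sub] vec.subspace_scale[OF Rsub] vector_add_ldistrib)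
    qed
  qed
  have SU: "S \<subseteq> U" unfolding S_def using U1U u(1) Uinv vec.subspace_add[OF Usub] by auto
  have Sinv: "\<forall>r\<in>R. \<forall>v\<in>S. m r v \<in> S"
  proof (intro ballI)
    fix r v assume r: "r \<in> R" and "v \<in> S"
    then obtain w1 r1 where "v = w1 + m r1 u" "w1 \<in> U1" "r1 \<in> R" unfolding S_def by blast
    then show "m r v \<in> S" using r U1inv Rmul
      by (intro memS[of "m r w1" "m r r1"]) (auto simp: addR assoc)
  qed
  have "\<not> P S" using maxeq[of S] U1S SU1 by blast
  then have "S = U" using Ssub SU Sinv unfolding P_def by auto
  then obtain w r where wr: "u = w + m r u" "w \<in> U1" "r \<in> R" using u(1) unfolding S_def by auto
  obtain M where M: "pw r M = 0" using Rnil[OF wr(3)] by blast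
  have "u - m (pw r k) u \<in> U1" for k
  proof (induction k)
    case 0 then show ?case using vec.subspace_0[OF U1sub] by simp
  next
    case (Suc k)
    have "u - m (pw r (Suc k)) u = (u - m r u) + m r (u - m (pw r k) u)"
      by (simp add: diffR assoc)
    moreover have "u - m r u = w" using wr(1) by (simp add: algebra_simps)
    ultimately show ?case using Suc wr U1inv vec.subspace_add[OF U1sub] by simp
  qed
  from this[of M] have "u \<in> U1" using M by simp
  then show False using u by simp
qed

primrec Vs :: "('k^'n) set \<Rightarrow> nat \<Rightarrow> ('k^'n) set" where
  "Vs R 0 = UNIV" | "Vs R (Suc i) = vec.span {m r v | r v. r \<in> R \<and> v \<in> Vs R i}"

lemma wedderburn:
  assumes Rsub: "vec.subspace R" and Rmul: "\<And>r s. r \<in> R \<Longrightarrow> s \<in> R \<Longrightarrow> m r s \<in> R"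
    and Rnil: "\<And>r. r \<in> R \<Longrightarrow> \<exists>M. pw r M = 0"
  shows "\<exists>k\<ge>1. \<forall>as. length as = k \<and> set as \<subseteq> R \<longrightarrow> foldr m as one = 0"
proof -
  have sub: "vec.subspace (Vs R i)" for i by (cases i) simp_all
  have inv: "m r v \<in> Vs R i" if "r \<in> R" "v \<in> Vs R i" for r v i
  proof (cases i)
    case 0 then show ?thesis by simp
  next
    case (Suc j)
    let ?X = "{m r v | r v. r \<in> R \<and> v \<in> Vs R j}"
    interpret lm: Vector_Spaces.linear "(*s)" "(*s)" "m r" by (rule linR)
    have "m r ` ?X \<subseteq> ?X"
    proof (rule image_subsetI)
      fix x assume "x \<in> ?X"
      then obtain ra v where "x = m ra v" "ra \<in> R" "v \<in> Vs R j" by blast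
      moreover have "m r (m ra v) = m (m r ra) v" by (simp add: assoc)
      ultimately show "m r x \<in> ?X" using that(1) Rmul by blast
    qed
    then have "vec.span (m r ` ?X) \<subseteq> vec.span ?X" by (rule vec.span_mono)
    then have "m r ` vec.span ?X \<subseteq> vec.span ?X" by (simp add: lm.span_image)
    then show ?thesis using that(2) Suc by auto
  qed
  have dec: "Vs R (Suc i) \<subseteq> Vs R i" for i
  proof (induction i)
    case 0 then show ?case by simp
  next
    case (Suc i)
    have A: "Vs R (Suc (Suc i)) = vec.span {m r v | r v. r \<in> R \<and> v \<in> Vs R (Suc i)}" by (rule Vs.simps(2))
    have C: "{m r v | r v. r \<in> R \<and> v \<in> Vs R (Suc i)} \<subseteq> {m r v | r v. r \<in> R \<and> v \<in> Vs R i}"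
      using Suc.IH by blast
    have "Vs R (Suc (Suc i)) \<subseteq> vec.span {m r v | r v. r \<in> R \<and> v \<in> Vs R i}"
      unfolding A by (rule vec.span_mono[OF C])
    then show ?case by simp
  qed
  obtain N where N: "Vs R (Suc N) = Vs R N" using chain_stab[of "Vs R", OF sub dec] by blast
  have "Vs R N \<subseteq> {0}"
  proof (rule key_nil[OF Rsub Rmul Rnil sub inv])
    show "Vs R N \<subseteq> vec.span {m r v | r v. r \<in> R \<and> v \<in> Vs R N}"
      using N by simp
  qed auto
  then have z: "Vs R (Suc N) \<subseteq> {0}" using N by simp
  have fin: "foldr m as one \<in> Vs R (length as)" if "set as \<subseteq> R" for as
    using that
  proof (induction as)
    case Nil then show ?case by simp
  next
    case (Cons r as)
    then show ?case by (auto intro!: vec.span_base)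
  qed
  show ?thesis
  proof (rule exI[of _ "Suc N"], intro conjI allI impI)
    fix as :: "('k^'n) list" assume "length as = Suc N \<and> set as \<subseteq> R"
    then have "foldr m as one \<in> Vs R (Suc N)" using fin by metis
    then show "foldr m as one = 0" using z by blast
  qed simp
qed

definition ssimple :: bool where
  "ssimple \<longleftrightarrow> (\<forall>J. (0 \<in> J \<and> (\<forall>a\<in>J. \<forall>b\<in>J. a + b \<in> J) \<and> (\<forall>c. \<forall>a\<in>J. c *s a \<in> J) \<and>
       (\<forall>s. \<forall>a\<in>J. m s a \<in> J \<and> m a s \<in> J)) \<and>
       (\<exists>k\<ge>1. \<forall>as. length as = k \<and> set as \<subseteq> J \<longrightarrow> foldr m as one = 0) \<longrightarrow> J \<subseteq> {0})"

lemma rad_zero: "ssimple \<Longrightarrow> rad \<subseteq> {0}"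
  unfolding ssimple_def
proof (erule allE, erule mp, intro conjI)
  show "0 \<in> rad" using vec.subspace_0[OF rad_sub] .
  show "\<forall>a\<in>rad. \<forall>b\<in>rad. a + b \<in> rad" using vec.subspace_add[OF rad_sub] by blast
  show "\<forall>c. \<forall>a\<in>rad. c *s a \<in> rad" using vec.subspace_scale[OF rad_sub] by blast
  show "\<forall>s. \<forall>a\<in>rad. m s a \<in> rad \<and> m a s \<in> rad" using rad_multL rad_multR by blast
  show "\<exists>k\<ge>1. \<forall>as. length as = k \<and> set as \<subseteq> rad \<longrightarrow> foldr m as one = 0"
    by (rule wedderburn[OF rad_sub rad_multR rad_nil])
qed

definition G :: "'k^'n^'n" where "G = (\<chi> k l. Bf (axis k 1) (axis l 1))"

lemma Bf_expandR: "Bf x y = (\<Sum>l\<in>UNIV. y $ l * Bf x (axis l 1))"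
  using Bf_expandL[of y x] by (simp add: Bf_sym)

lemma G_mv: "(G *v y) $ k = Bf (axis k 1) y"
  by (simp add: G_def matrix_vector_mult_def Bf_expandR[of "axis k 1" y] mult.commute)

lemma G_inv: "ssimple \<Longrightarrow> invertible G"
  unfolding invertible_left_inverse matrix_left_invertible_ker
proof (intro allI impI)
  fix y assume ss: ssimple and y: "G *v y = 0"
  have "Bf (axis k 1) y = 0" for k using G_mv[of y k] y by simp
  then have "Bf x y = 0" for x using Bf_expandL[of x y] by simp
  then have "y \<in> rad" unfolding rad_def by (simp add: Bf_sym)
  then show "y = 0" using rad_zero[OF ss] by auto
qed

lemma G_sym: "transpose G = G"
  by (simp add: G_def transpose_def Bf_sym)

end


definition cjhom :: "('k::field \<Rightarrow> 'k) \<Rightarrow> bool" where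
  "cjhom cj \<longleftrightarrow> (\<forall>a b. cj (a + b) = cj a + cj b) \<and> (\<forall>a b. cj (a * b) = cj a * cj b) \<and>
     (\<forall>a. cj (cj a) = a) \<and> cj 1 = 1"

lemma cjhom_id: "cjhom (\<lambda>x. x)" by (simp add: cjhom_def)
lemma cjhom_cnj: "cjhom cnj" by (simp add: cjhom_def)

lemma mv_nth: "(M *v w) $ p = (\<Sum>l\<in>UNIV. M $ p $ l * w $ l)"
  by (simp add: matrix_vector_mult_def)

definition cjv :: "('k \<Rightarrow> 'k) \<Rightarrow> 'k^'n \<Rightarrow> 'k^'n" where "cjv cj v = (\<chi> i. cj (v $ i))"

context fixes cj :: "'k::field \<Rightarrow> 'k" assumes cj: "cjhom cj" begin

lemma cj_add: "cj (a + b) = cj a + cj b" and cj_mult: "cj (a * b) = cj a * cj b"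
  and cj_cj[simp]: "cj (cj a) = a" and cj_one[simp]: "cj 1 = 1" using cj unfolding cjhom_def by auto
lemma cj_zero[simp]: "cj 0 = 0" using cj_add[of 0 0] by (metis add.right_neutral add_left_cancel)
lemma cj_sum: "cj (sum f S) = (\<Sum>i\<in>S. cj (f i))"
  by (induction S rule: infinite_finite_induct) (simp_all add: cj_add)

lemma cjv_cjv[simp]: "cjv cj (cjv cj v) = v" by (simp add: cjv_def vec_eq_iff)
lemma cjv_zero[simp]: "cjv cj 0 = 0" by (simp add: cjv_def vec_eq_iff)
lemma cjv_mv: "cjv cj (M *v v) = map_matrix cj M *v cjv cj v"
  by (simp add: cjv_def matrix_vector_mult_def cj_sum cj_mult vec_eq_iff)
lemma cj_mm: "map_matrix cj (X ** Y) = map_matrix cj X ** map_matrix cj Y"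
  by (simp add: matrix_matrix_mult_def cj_sum cj_mult vec_eq_iff)
lemma cj_mat1: "map_matrix cj (mat 1) = mat 1"
  by (simp add: mat_def vec_eq_iff)
lemma cj_trace: "trace (map_matrix cj M) = cj (trace M)"
  by (simp add: trace_def cj_sum)

lemma semi_matrix:
  fixes g :: "'k^'n \<Rightarrow> 'k^'m"
  assumes add: "\<And>x y. g (x + y) = g x + g y" and sm: "\<And>c x. g (c *s x) = cj c *s g x"
  shows "g v = matrix g *v cjv cj v"
proof -
  have g0: "g 0 = 0" using add[of 0 0] by simp
  have gs: "g (sum f S) = (\<Sum>i\<in>S. g (f i))" for f :: "'n \<Rightarrow> _" and S
    by (induction S rule: infinite_finite_induct) (simp_all add: add g0)
  have "g v = g (\<Sum>j\<in>UNIV. v $ j *s axis j 1)" by (simp add: basis_expansion)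
  also have "\<dots> = (\<Sum>j\<in>UNIV. cj (v $ j) *s g (axis j 1))" by (simp add: gs sm)
  also have "\<dots> = matrix g *v cjv cj v"
    by (simp add: vec_eq_iff matrix_vector_mult_def matrix_def cjv_def mult.commute)
  finally show ?thesis .
qed

lemma semi_inv:
  fixes g :: "'k^'n \<Rightarrow> 'k^'n"
  assumes add: "\<And>x y. g (x + y) = g x + g y" and sm: "\<And>c x. g (c *s x) = cj c *s g x"
    and inj: "inj g"
  shows "invertible (matrix g)"
  unfolding invertible_left_inverse matrix_left_invertible_ker
proof (intro allI impI)
  fix x assume "matrix g *v x = 0"
  then have "g (cjv cj x) = g 0" using semi_matrix[OF add sm, of "cjv cj x"] add[of 0 0] by simp
  then have "cjv cj x = 0" using inj by (simp add: inj_eq)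
  then show "x = 0" using cjv_cjv[of x] by simp
qed

end

locale salg = talg + assumes ss: ssimple
begin

definition Cm where "Cm = matrix_inv G"

lemma GC: "G ** Cm = mat 1" and CG: "Cm ** G = mat 1"
proof -
  have "\<exists>A'. G ** A' = mat 1 \<and> A' ** G = mat 1" using G_inv[OF ss] unfolding invertible_def .
  then have "G ** Cm = mat 1 \<and> Cm ** G = mat 1" unfolding Cm_def matrix_inv_def by (rule someI_ex)
  then show "G ** Cm = mat 1" "Cm ** G = mat 1" by auto
qed

lemma Cm_sym: "transpose Cm = Cm"
proof -
  have "transpose (G ** Cm) = mat 1" using GC by simp
  then have tc: "transpose Cm ** G = mat 1" by (simp add: matrix_transpose_mul G_sym)
  have "transpose Cm = transpose Cm ** (G ** Cm)" by (simp add: GC)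
  also have "\<dots> = Cm" by (simp add: matrix_mul_assoc tc)
  finally show ?thesis .
qed

lemma Cm_sym': "Cm $ i $ j = Cm $ j $ i"
  using Cm_sym by (metis transpose_def vec_lambda_beta)

lemma coord: "v $ p = (\<Sum>l\<in>UNIV. Cm $ p $ l * Bf (axis l 1) v)"
proof -
  have "v $ p = (Cm *v (G *v v)) $ p" by (simp add: matrix_vector_mul_assoc CG)
  also have "\<dots> = (\<Sum>l\<in>UNIV. Cm $ p $ l * Bf (axis l 1) v)" by (simp only: mv_nth[of Cm] G_mv)
  finally show ?thesis .
qed

lemma Bf_diffR: "Bf a (b - c) = Bf a b - Bf a c" by (simp add: Bf_def diffR tr_diff)

lemma Bf_nondeg: assumes "\<And>x. Bf x a = Bf x b" shows "a = b"
proof -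
  have "a - b \<in> rad" unfolding rad_def using assms by (simp add: Bf_sym[of "a - b"] Bf_diffR)
  then show ?thesis using rad_zero[OF ss] by auto
qed

definition muE where "muE = (\<Sum>k\<in>UNIV. \<Sum>l\<in>UNIV. Cm $ k $ l *s m (axis k 1) (axis l 1))"

lemma tr_coord: "tr x = (\<Sum>q\<in>UNIV. \<Sum>l\<in>UNIV. Cm $ q $ l * Bf (axis l 1) (m x (axis q 1)))"
  unfolding tr_expl by (rule sum.cong[OF refl]) (rule coord)

lemma Bf_muE: "Bf x muE = (\<Sum>q\<in>UNIV. \<Sum>l\<in>UNIV. Cm $ q $ l * Bf x (m (axis q 1) (axis l 1)))"
  by (simp add: muE_def Bf_sumR Bf_smR)

lemma muE_one: "muE = one"
proof (rule Bf_nondeg)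
  fix x
  have e: "Bf a (m x b) = Bf x (m b a)" for a b
  proof -
    have "Bf a (m x b) = Bf (m a x) b" by (simp add: Bf_assoc)
    also have "\<dots> = Bf b (m a x)" by (rule Bf_sym)
    also have "\<dots> = tr (m (m b a) x)" by (simp add: Bf_def assoc)
    also have "\<dots> = tr (m x (m b a))" by (rule tr_comm)
    finally show ?thesis by (simp add: Bf_def)
  qed
  have "Bf x one = (\<Sum>q\<in>UNIV. \<Sum>l\<in>UNIV. Cm $ q $ l * Bf (axis l 1) (m x (axis q 1)))"
    by (simp add: Bf_oneR tr_coord)
  also have "\<dots> = Bf x muE" unfolding Bf_muE e ..
  finally show "Bf x muE = Bf x one" by simp
qed

lemma trR: "(\<Sum>q\<in>UNIV. m (axis q 1) x $ q) = tr x"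
proof -
  have e: "Bf a (m b x) = Bf x (m a b)" for a b
  proof -
    have "Bf a (m b x) = tr (m (m a b) x)" by (simp add: Bf_def assoc)
    also have "\<dots> = tr (m x (m a b))" by (rule tr_comm)
    finally show ?thesis by (simp add: Bf_def)
  qed
  have "(\<Sum>q\<in>UNIV. m (axis q 1) x $ q) = (\<Sum>q\<in>UNIV. \<Sum>l\<in>UNIV. Cm $ q $ l * Bf (axis l 1) (m (axis q 1) x))"
    by (rule sum.cong[OF refl]) (rule coord)
  also have "\<dots> = (\<Sum>q\<in>UNIV. \<Sum>l\<in>UNIV. Cm $ l $ q * Bf x (m (axis l 1) (axis q 1)))"
    unfolding e by (simp add: Cm_sym')
  also have "\<dots> = Bf x muE" unfolding Bf_muE by (rule sum.swap)
  also have "\<dots> = tr x" by (simp add: muE_one Bf_oneR)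
  finally show ?thesis .
qed

definition Rm where "Rm y = matrix (\<lambda>v. m v y)"

lemma Rm_mv: "Rm y *v v = m v y" by (simp add: Rm_def matrix_works[OF linL])
lemma trace_Rm: "trace (Rm y) = tr y" by (simp add: Rm_def trace_def matrix_def trR)
lemma trace_L: "trace (L y) = tr y" by (simp add: tr_def)

lemma Bf_mat: "Bf x y = (\<Sum>p\<in>UNIV. x $ p * (\<Sum>q\<in>UNIV. y $ q * G $ p $ q))"
proof -
  have "Bf x y = (\<Sum>p\<in>UNIV. x $ p * Bf (axis p 1) y)" by (rule Bf_expandL)
  also have "\<dots> = (\<Sum>p\<in>UNIV. x $ p * (\<Sum>q\<in>UNIV. y $ q * G $ p $ q))"
    by (rule sum.cong[OF refl], subst Bf_expandR) (simp add: G_def)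
  finally show ?thesis .
qed

lemma comm: "L y ** Cm = Cm ** transpose (Rm y)"
proof -
  have GL: "G ** L y = transpose (Rm y) ** G"
  proof -
    have "(G ** L y) $ k $ q = (transpose (Rm y) ** G) $ k $ q" for k q
    proof -
      have "(G ** L y) $ k $ q = Bf (axis k 1) (m y (axis q 1))"
        by (simp add: matrix_matrix_mult_def L_def matrix_def Bf_expandR[of "axis k 1" "m y (axis q 1)"] G_def mult.commute)
      also have "\<dots> = Bf (m (axis k 1) y) (axis q 1)" by (simp add: Bf_assoc)
      also have "\<dots> = (transpose (Rm y) ** G) $ k $ q"
        by (simp add: matrix_matrix_mult_def Rm_def matrix_def transpose_def Bf_expandL[of "m (axis k 1) y" "axis q 1"] G_def)
      finally show ?thesis .
    qed
    then show ?thesis by (simp add: vec_eq_iff)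
  qed
  have "L y ** Cm = (Cm ** G) ** L y ** Cm" by (simp add: CG)
  also have "\<dots> = Cm ** (G ** L y) ** Cm" by (simp add: matrix_mul_assoc)
  also have "\<dots> = Cm ** transpose (Rm y) ** (G ** Cm)" by (simp add: GL matrix_mul_assoc)
  also have "\<dots> = Cm ** transpose (Rm y)" by (simp add: GC)
  finally show ?thesis .
qed

end


lemma map_matrix_id[simp]: "map_matrix (\<lambda>x. x) M = M" by (simp add: vec_eq_iff)

context salg begin

lemma semi_tr:
  fixes g :: "'a^'b \<Rightarrow> 'a^'b" and cj :: "'a \<Rightarrow> 'a"
  assumes cj: "cjhom cj" and add: "\<And>x y. g (x + y) = g x + g y" and sm: "\<And>c x. g (c *s x) = cj c *s g x"
    and inj: "inj g" and LA: "L (g x) ** matrix g = matrix g ** map_matrix cj M"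
  shows "tr (g x) = cj (trace M)"
proof -
  obtain A' where A: "matrix g ** A' = mat 1" "A' ** matrix g = mat 1"
    using semi_inv[OF cj add sm inj] unfolding invertible_def by blast
  have "L (g x) = L (g x) ** (matrix g ** A')" by (simp add: A)
  also have "\<dots> = matrix g ** (map_matrix cj M ** A')" by (simp add: matrix_mul_assoc LA)
  finally have "tr (g x) = trace (matrix g ** (map_matrix cj M ** A'))" by (simp add: tr_def)
  also have "\<dots> = trace ((map_matrix cj M ** A') ** matrix g)" by (rule trace_mul_sym)
  also have "\<dots> = trace (map_matrix cj M)" by (simp add: matrix_mul_assoc[symmetric] A)
  finally show ?thesis by (simp add: cj_trace[OF cj])
qed

lemma gw_lemma:
  fixes g :: "'a^'b \<Rightarrow> 'a^'b" and cj :: "'a \<Rightarrow> 'a"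
  assumes cj: "cjhom cj" and add: "\<And>x y. g (x + y) = g x + g y" and sm: "\<And>c x. g (c *s x) = cj c *s g x"
  shows "matrix g *v w = g (cjv cj w)"
  using semi_matrix[OF cj add sm, of "cjv cj w"] cjv_cjv[OF cj, of w] by simp

lemma LA_mult:
  fixes g :: "'a^'b \<Rightarrow> 'a^'b" and cj :: "'a \<Rightarrow> 'a"
  assumes cj: "cjhom cj" and add: "\<And>x y. g (x + y) = g x + g y" and sm: "\<And>c x. g (c *s x) = cj c *s g x"
    and mul: "\<And>a b. g (m a b) = m (g a) (g b)"
  shows "L (g x) ** matrix g = matrix g ** map_matrix cj (L x)"
  unfolding matrix_eq
proof
  fix w
  have "(L (g x) ** matrix g) *v w = m (g x) (g (cjv cj w))"
    by (simp add: matrix_vector_mul_assoc[symmetric] gw_lemma[OF cj add sm] L_mv)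
  also have "\<dots> = g (m x (cjv cj w))" by (simp add: mul)
  also have "\<dots> = matrix g *v cjv cj (L x *v cjv cj w)"
    unfolding L_mv by (rule semi_matrix[OF cj add sm])
  also have "\<dots> = (matrix g ** map_matrix cj (L x)) *v w"
    by (simp add: cjv_mv[OF cj] matrix_vector_mul_assoc[symmetric] cjv_cjv[OF cj, of w])
  finally show "(L (g x) ** matrix g) *v w = (matrix g ** map_matrix cj (L x)) *v w" .
qed

lemma LA_anti:
  fixes g :: "'a^'b \<Rightarrow> 'a^'b" and cj :: "'a \<Rightarrow> 'a"
  assumes cj: "cjhom cj" and add: "\<And>x y. g (x + y) = g x + g y" and sm: "\<And>c x. g (c *s x) = cj c *s g x"
    and anti: "\<And>a b. g (m a b) = m (g b) (g a)"
  shows "L (g x) ** matrix g = matrix g ** map_matrix cj (Rm x)"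
  unfolding matrix_eq
proof
  fix w
  have "(L (g x) ** matrix g) *v w = m (g x) (g (cjv cj w))"
    by (simp add: matrix_vector_mul_assoc[symmetric] gw_lemma[OF cj add sm] L_mv)
  also have "\<dots> = g (m (cjv cj w) x)" by (simp add: anti)
  also have "\<dots> = matrix g *v cjv cj (Rm x *v cjv cj w)"
    unfolding Rm_mv by (rule semi_matrix[OF cj add sm])
  also have "\<dots> = (matrix g ** map_matrix cj (Rm x)) *v w"
    by (simp add: cjv_mv[OF cj] matrix_vector_mul_assoc[symmetric] cjv_cjv[OF cj, of w])
  finally show "(L (g x) ** matrix g) *v w = (matrix g ** map_matrix cj (Rm x)) *v w" .
qed

lemma form_semi:
  fixes g :: "'a^'b \<Rightarrow> 'a^'b" and cj :: "'a \<Rightarrow> 'a"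
  assumes cj: "cjhom cj" and add: "\<And>x y. g (x + y) = g x + g y" and sm: "\<And>c x. g (c *s x) = cj c *s g x"
    and inj: "inj g" and B: "\<And>a b. Bf (g a) (g b) = cj (Bf a b)"
  shows "matrix g ** map_matrix cj Cm ** transpose (matrix g) = Cm"
proof -
  let ?A = "matrix g"
  obtain A' where A: "?A ** A' = mat 1" "A' ** ?A = mat 1"
    using semi_inv[OF cj add sm inj] unfolding invertible_def by blast
  have col: "g (axis k 1) $ p = ?A $ p $ k" for k p by (simp add: matrix_def)
  have gram: "transpose ?A ** G ** ?A = map_matrix cj G"
  proof -
    have "(transpose ?A ** G ** ?A) $ k $ l = cj (G $ k $ l)" for k l
    proof -
      have "(transpose ?A ** G ** ?A) $ k $ l = (\<Sum>q\<in>UNIV. \<Sum>p\<in>UNIV. ?A$p$k * G$p$q * ?A$q$l)"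
        by (simp add: matrix_matrix_mult_def transpose_def sum_distrib_right)
      also have "\<dots> = (\<Sum>p\<in>UNIV. \<Sum>q\<in>UNIV. ?A$p$k * G$p$q * ?A$q$l)" by (rule sum.swap)
      also have "\<dots> = (\<Sum>p\<in>UNIV. ?A$p$k * (\<Sum>q\<in>UNIV. ?A$q$l * G$p$q))"
        by (simp add: sum_distrib_left mult_ac)
      also have "\<dots> = Bf (g (axis k 1)) (g (axis l 1))" by (simp add: Bf_mat col)
      also have "\<dots> = cj (G $ k $ l)" by (simp add: B G_def)
      finally show ?thesis .
    qed
    then show ?thesis by (simp add: vec_eq_iff)
  qed
  have tAG: "transpose ?A ** G = map_matrix cj G ** A'"
  proof -
    have "transpose ?A ** G = transpose ?A ** G ** (?A ** A')" by (simp add: A)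
    also have "\<dots> = map_matrix cj G ** A'" by (simp add: matrix_mul_assoc gram)
    finally show ?thesis .
  qed
  have cjCG: "map_matrix cj Cm ** map_matrix cj G = mat 1"
    by (simp add: cj_mm[OF cj, symmetric] CG cj_mat1[OF cj])
  let ?X = "?A ** map_matrix cj Cm ** transpose ?A"
  have "?X ** G = ?A ** map_matrix cj Cm ** (transpose ?A ** G)" by (simp add: matrix_mul_assoc)
  also have "\<dots> = ?A ** (map_matrix cj Cm ** map_matrix cj G) ** A'" by (simp add: tAG matrix_mul_assoc)
  also have "\<dots> = mat 1" by (simp add: cjCG A)
  finally have XG: "?X ** G = mat 1" .
  have "?X = ?X ** (G ** Cm)" by (simp add: GC)
  also have "\<dots> = Cm" by (simp add: matrix_mul_assoc XG)
  finally show ?thesis .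
qed

lemma aut_C:
  fixes g :: "'a^'b \<Rightarrow> 'a^'b"
  assumes add: "\<And>x y. g (x + y) = g x + g y" and sm: "\<And>c x. g (c *s x) = c *s g x"
    and mul: "\<And>a b. g (m a b) = m (g a) (g b)" and inj: "inj g"
  shows "matrix g ** Cm ** transpose (matrix g) = Cm"
proof -
  have sm': "\<And>c x. g (c *s x) = (\<lambda>x. x) c *s g x" using sm by simp
  have "Bf (g a) (g b) = Bf a b" for a b
  proof -
    have "Bf (g a) (g b) = tr (g (m a b))" by (simp add: Bf_def mul)
    also have "\<dots> = trace (L (m a b))"
      using semi_tr[OF cjhom_id add sm' inj LA_mult[OF cjhom_id add sm' mul]] by simp
    finally show ?thesis by (simp add: Bf_def tr_def)
  qed
  then show ?thesis using form_semi[OF cjhom_id add sm' inj] by simp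
qed

lemma anti_C:
  fixes g :: "'a^'b \<Rightarrow> 'a^'b" and cj :: "'a \<Rightarrow> 'a"
  assumes cj: "cjhom cj" and add: "\<And>x y. g (x + y) = g x + g y" and sm: "\<And>c x. g (c *s x) = cj c *s g x"
    and anti: "\<And>a b. g (m a b) = m (g b) (g a)" and inj: "inj g"
  shows "matrix g ** map_matrix cj Cm ** transpose (matrix g) = Cm"
proof -
  have "Bf (g a) (g b) = cj (Bf a b)" for a b
  proof -
    have "Bf (g a) (g b) = tr (g (m b a))" by (simp add: Bf_def anti)
    also have "\<dots> = cj (trace (Rm (m b a)))"
      by (rule semi_tr[OF cj add sm inj LA_anti[OF cj add sm anti]])
    also have "\<dots> = cj (tr (m a b))" by (simp add: trace_Rm tr_comm)
    finally show ?thesis by (simp add: Bf_def)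
  qed
  then show ?thesis using form_semi[OF cj add sm inj] by simp
qed

end


definition triv_at where "triv_at B x = (SOME p. x \<in> fst p \<and> local_triv B (fst p) (snd p))"
definition phx where "phx B x = snd (triv_at B x)"
definition ivx where "ivx B x v = (SOME e. e \<in> fiberE B x \<and> phx B x e = v)"
definition allpairs :: "('n::finite \<times> 'n) list" where "allpairs = (SOME xs. set xs = UNIV \<and> distinct xs)"
definition esec where
  "esec B x = map (\<lambda>(k, l). (ivx B x (salg.Cm (tmul B) $ k $ l *s axis k 1), ivx B x (axis l 1))) allpairs"

lemma allpairs: "set (allpairs :: ('n::finite \<times> 'n) list) = UNIV" "distinct (allpairs :: ('n \<times> 'n) list)"
proof -
  have "\<exists>xs. set xs = (UNIV :: ('n \<times> 'n) set) \<and> distinct xs" using finite_distinct_list[of "UNIV :: ('n \<times> 'n) set"] by simp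
  then have "set (allpairs :: ('n \<times> 'n) list) = UNIV \<and> distinct (allpairs :: ('n \<times> 'n) list)"
    unfolding allpairs_def by (rule someI_ex)
  then show "set (allpairs :: ('n \<times> 'n) list) = UNIV" "distinct (allpairs :: ('n \<times> 'n) list)" by auto
qed

lemma lt_subset: "local_triv B W \<phi> \<Longrightarrow> W \<subseteq> topspace (bbase B)"
  unfolding local_triv_def using openin_subset by blast

lemma lt_fiber:
  assumes "local_triv B W \<phi>" "x \<in> W"
  shows "inj_on \<phi> (fiberE B x)" and "\<exists>e\<in>fiberE B x. \<phi> e = w"
proof -
  let ?S = "{v \<in> topspace (btotal B). bproj B v \<in> W}"
  have hm: "homeomorphic_map (subtopology (btotal B) ?S) (prod_topology (subtopology (bbase B) W) euclidean) (\<lambda>v. (bproj B v, \<phi> v))"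
    using assms(1) unfolding local_triv_def by blast
  have inj: "inj_on (\<lambda>v. (bproj B v, \<phi> v)) ?S"
    using homeomorphic_imp_injective_map[OF hm] by (simp add: Int_absorb1)
  have sur: "(\<lambda>v. (bproj B v, \<phi> v)) ` ?S = (topspace (bbase B) \<inter> W) \<times> UNIV"
    using homeomorphic_imp_surjective_map[OF hm] by (simp add: Int_absorb1)
  have fs: "fiberE B x \<subseteq> ?S" using assms(2) by (auto simp: fiberE_def)
  show "inj_on \<phi> (fiberE B x)"
  proof (rule inj_onI)
    fix a b assume a: "a \<in> fiberE B x" and b: "b \<in> fiberE B x" and e: "\<phi> a = \<phi> b"
    have "(bproj B a, \<phi> a) = (bproj B b, \<phi> b)" using a b e by (simp add: fiberE_def)
    then show "a = b" using inj fs a b by (meson inj_onD subsetD)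
  qed
  have "x \<in> topspace (bbase B)" using lt_subset[OF assms(1)] assms(2) by auto
  then have "(x, w) \<in> (\<lambda>v. (bproj B v, \<phi> v)) ` ?S" using sur assms(2) by auto
  then obtain v where "v \<in> ?S" "bproj B v = x" "\<phi> v = w" by auto
  then show "\<exists>e\<in>fiberE B x. \<phi> e = w" by (auto simp: fiberE_def)
qed

lemma lt_alg:
  assumes "local_triv B W \<phi>" "x \<in> W"
  shows "bzero B x \<in> fiberE B x" "\<phi> (bzero B x) = 0" "bone B x \<in> fiberE B x" "\<phi> (bone B x) = tone B"
   and "a \<in> fiberE B x \<Longrightarrow> b \<in> fiberE B x \<Longrightarrow> badd B a b \<in> fiberE B x \<and> \<phi> (badd B a b) = \<phi> a + \<phi> b"
   and "a \<in> fiberE B x \<Longrightarrow> bsmult B c a \<in> fiberE B x \<and> \<phi> (bsmult B c a) = c *s \<phi> a"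
   and "a \<in> fiberE B x \<Longrightarrow> b \<in> fiberE B x \<Longrightarrow> bmul B a b \<in> fiberE B x \<and> \<phi> (bmul B a b) = tmul B (\<phi> a) (\<phi> b)"
  using assms unfolding local_triv_def by blast+

lemma tcoord_swap: "tcoord \<phi> (map (\<lambda>(a, b). (b, a)) l) = transpose (tcoord \<phi> l)"
proof (induction l)
  case Nil then show ?case by (simp add: tcoord_def transpose_def vec_eq_iff)
next
  case (Cons p l)
  then show ?case
    by (cases p) (simp add: tcoord_def outer_def transpose_def vec_eq_iff)
qed

lemma tcoord_esec:
  fixes h1 h2 :: "'e \<Rightarrow> 'e" and \<phi> :: "'e \<Rightarrow> 'k::real_normed_field^'n::finite"
    and B :: "('g, 'x, 'e, 'k, 'n) algbundle"
  assumes sm: "\<And>c v. \<phi> (h1 (ivx B x (c *s v))) = cj c *s \<phi> (h1 (ivx B x v))"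
  shows "tcoord \<phi> (map (\<lambda>(a, b). (h1 a, h2 b)) (esec B x)) =
    matrix (\<lambda>v. \<phi> (h1 (ivx B x v))) ** map_matrix cj (salg.Cm (tmul B)) ** transpose (matrix (\<lambda>v. \<phi> (h2 (ivx B x v))))"
proof -
  let ?C = "salg.Cm (tmul B)"
  let ?g1 = "\<lambda>v. \<phi> (h1 (ivx B x v))" and ?g2 = "\<lambda>v. \<phi> (h2 (ivx B x v))"
  have "tcoord \<phi> (map (\<lambda>(a, b). (h1 a, h2 b)) (esec B x)) =
      sum_list (map (\<lambda>(k, l). outer (?g1 (?C $ k $ l *s axis k 1)) (?g2 (axis l 1))) allpairs)"
    unfolding tcoord_def esec_def map_map by (simp add: o_def split_def)
  also have "\<dots> = (\<Sum>(k, l)\<in>UNIV. outer (?g1 (?C $ k $ l *s axis k 1)) (?g2 (axis l 1)))"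
    by (simp add: sum_list_distinct_conv_sum_set allpairs)
  also have "\<dots> = (\<Sum>k\<in>UNIV. \<Sum>l\<in>UNIV. outer (?g1 (?C $ k $ l *s axis k 1)) (?g2 (axis l 1)))"
    by (simp add: sum.cartesian_product UNIV_Times_UNIV[symmetric] del: UNIV_Times_UNIV)
  also have "\<dots> = matrix ?g1 ** map_matrix cj ?C ** transpose (matrix ?g2)"
  proof -
    have "(\<Sum>k\<in>UNIV. \<Sum>l\<in>UNIV. outer (?g1 (?C $ k $ l *s axis k 1)) (?g2 (axis l 1))) $ p $ q =
          (matrix ?g1 ** map_matrix cj ?C ** transpose (matrix ?g2)) $ p $ q" for p q
    proof -
      have "(\<Sum>k\<in>UNIV. \<Sum>l\<in>UNIV. outer (?g1 (?C $ k $ l *s axis k 1)) (?g2 (axis l 1))) $ p $ q =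
         (\<Sum>k\<in>UNIV. \<Sum>l\<in>UNIV. cj (?C $ k $ l) * ?g1 (axis k 1) $ p * ?g2 (axis l 1) $ q)"
        by (simp add: outer_def sm mult.assoc)
      also have "\<dots> = (\<Sum>l\<in>UNIV. \<Sum>k\<in>UNIV. cj (?C $ k $ l) * ?g1 (axis k 1) $ p * ?g2 (axis l 1) $ q)"
        by (rule sum.swap)
      also have "\<dots> = (matrix ?g1 ** map_matrix cj ?C ** transpose (matrix ?g2)) $ p $ q"
        by (simp add: matrix_matrix_mult_def transpose_def matrix_def sum_distrib_left sum_distrib_right mult_ac)
      finally show ?thesis .
    qed
    then show ?thesis by (simp add: vec_eq_iff)
  qed
  finally show ?thesis .
qed


locale abund =
  fixes B :: "('g, 'x, 'e, 'k::real_normed_field, 'n::finite) algbundle"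
  assumes lt: "loc_triv_alg_bundle B"
begin

lemma talgB: "talg (tmul B) (tone B)" using lt unfolding loc_triv_alg_bundle_def talg_def by blast

lemma triv_at_ok:
  assumes "x \<in> topspace (bbase B)"
  shows "x \<in> fst (triv_at B x)" "local_triv B (fst (triv_at B x)) (phx B x)"
proof -
  obtain W \<phi> where "x \<in> W" "local_triv B W \<phi>" using lt assms unfolding loc_triv_alg_bundle_def by blast
  then have "\<exists>p. x \<in> fst p \<and> local_triv B (fst p) (snd p)" by (intro exI[of _ "(W, \<phi>)"]) simp
  then have "x \<in> fst (triv_at B x) \<and> local_triv B (fst (triv_at B x)) (snd (triv_at B x))"
    unfolding triv_at_def by (rule someI_ex)
  then show "x \<in> fst (triv_at B x)" "local_triv B (fst (triv_at B x)) (phx B x)"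
    unfolding phx_def by auto
qed

lemma ivx:
  assumes "x \<in> topspace (bbase B)"
  shows "ivx B x v \<in> fiberE B x" "phx B x (ivx B x v) = v"
proof -
  have "\<exists>e. e \<in> fiberE B x \<and> phx B x e = v"
    using lt_fiber(2)[OF triv_at_ok(2)[OF assms] triv_at_ok(1)[OF assms]] by blast
  then have "ivx B x v \<in> fiberE B x \<and> phx B x (ivx B x v) = v" unfolding ivx_def by (rule someI_ex)
  then show "ivx B x v \<in> fiberE B x" "phx B x (ivx B x v) = v" by auto
qed

lemma ivx_phx:
  assumes "x \<in> topspace (bbase B)" "e \<in> fiberE B x"
  shows "ivx B x (phx B x e) = e"
  using inj_onD[OF lt_fiber(1)[OF triv_at_ok(2)[OF assms(1)] triv_at_ok(1)[OF assms(1)]]]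
    ivx[OF assms(1)] assms(2) by metis

lemma ivx_inj: "x \<in> topspace (bbase B) \<Longrightarrow> ivx B x v = ivx B x w \<Longrightarrow> v = w"
  by (metis ivx(2))

lemma ivx_hom:
  assumes x: "x \<in> topspace (bbase B)"
  shows "ivx B x (v + w) = badd B (ivx B x v) (ivx B x w)"
    "ivx B x (c *s v) = bsmult B c (ivx B x v)"
    "ivx B x (tmul B v w) = bmul B (ivx B x v) (ivx B x w)"
    "ivx B x 0 = bzero B x" "ivx B x (tone B) = bone B x"
proof -
  note T = triv_at_ok[OF x]
  note A = lt_alg[OF T(2) T(1)]
  have iv: "ivx B x v \<in> fiberE B x" "ivx B x w \<in> fiberE B x"
    and p: "phx B x (ivx B x v) = v" "phx B x (ivx B x w) = w" using ivx[OF x] by auto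
  show "ivx B x (v + w) = badd B (ivx B x v) (ivx B x w)"
    using A(5)[OF iv] p ivx_phx[OF x, of "badd B (ivx B x v) (ivx B x w)"] by simp
  show "ivx B x (c *s v) = bsmult B c (ivx B x v)"
    using A(6)[OF iv(1), of c] p ivx_phx[OF x, of "bsmult B c (ivx B x v)"] by simp
  show "ivx B x (tmul B v w) = bmul B (ivx B x v) (ivx B x w)"
    using A(7)[OF iv] p ivx_phx[OF x, of "bmul B (ivx B x v) (ivx B x w)"] by simp
  show "ivx B x 0 = bzero B x" using A(1,2) ivx_phx[OF x, of "bzero B x"] by simp
  show "ivx B x (tone B) = bone B x" using A(3,4) ivx_phx[OF x, of "bone B x"] by simp
qed

lemma trans_props:
  assumes "local_triv B W \<phi>" "x \<in> W"
  shows "\<phi> (ivx B x (v + w)) = \<phi> (ivx B x v) + \<phi> (ivx B x w)"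
    "\<phi> (ivx B x (c *s v)) = c *s \<phi> (ivx B x v)"
    "\<phi> (ivx B x (tmul B v w)) = tmul B (\<phi> (ivx B x v)) (\<phi> (ivx B x w))"
    "inj (\<lambda>v. \<phi> (ivx B x v))"
proof -
  have x: "x \<in> topspace (bbase B)" using lt_subset[OF assms(1)] assms(2) by auto
  note A = lt_alg[OF assms]
  have iv: "ivx B x v \<in> fiberE B x" "ivx B x w \<in> fiberE B x" using ivx[OF x] by auto
  show "\<phi> (ivx B x (v + w)) = \<phi> (ivx B x v) + \<phi> (ivx B x w)"
    using A(5)[OF iv] by (simp add: ivx_hom[OF x])
  show "\<phi> (ivx B x (c *s v)) = c *s \<phi> (ivx B x v)"
    using A(6)[OF iv(1)] by (simp add: ivx_hom[OF x])
  show "\<phi> (ivx B x (tmul B v w)) = tmul B (\<phi> (ivx B x v)) (\<phi> (ivx B x w))"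
    using A(7)[OF iv] by (simp add: ivx_hom[OF x])
  show "inj (\<lambda>v. \<phi> (ivx B x v))"
  proof (rule injI)
    fix v w assume "\<phi> (ivx B x v) = \<phi> (ivx B x w)"
    then have "ivx B x v = ivx B x w"
      using inj_onD[OF lt_fiber(1)[OF assms]] ivx(1)[OF x] by metis
    then show "v = w" by (rule ivx_inj[OF x])
  qed
qed

lemma ssimple_B:
  assumes ss: "semisimple_fibers B" and x0: "x0 \<in> topspace (bbase B)"
  shows "talg.ssimple (tmul B) (tone B)"
  unfolding talg.ssimple_def[OF talgB]
proof (intro allI impI)
  fix J assume H: "(0 \<in> J \<and> (\<forall>a\<in>J. \<forall>b\<in>J. a + b \<in> J) \<and> (\<forall>c. \<forall>a\<in>J. c *s a \<in> J) \<and>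
       (\<forall>s. \<forall>a\<in>J. tmul B s a \<in> J \<and> tmul B a s \<in> J)) \<and>
       (\<exists>k\<ge>1. \<forall>as. length as = k \<and> set as \<subseteq> J \<longrightarrow> foldr (tmul B) as (tone B) = 0)"
  let ?iv = "ivx B x0" and ?ph = "phx B x0"
  let ?I = "?iv ` J"
  note hom = ivx_hom[OF x0]
  have fib: "?iv v \<in> fiberE B x0" "?ph (?iv v) = v" for v using ivx[OF x0] by auto
  have sfib: "s = ?iv (?ph s)" if "s \<in> fiberE B x0" for s using ivx_phx[OF x0 that] by simp
  have fi: "fib_ideal B x0 ?I" unfolding fib_ideal_def
  proof (intro conjI ballI allI)
    show "?I \<subseteq> fiberE B x0" using fib by auto
    show "bzero B x0 \<in> ?I" using H hom(4) by (metis image_eqI)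
    show "badd B a b \<in> ?I" if "a \<in> ?I" "b \<in> ?I" for a b
      using that H by (auto simp flip: hom(1))
    show "bsmult B c a \<in> ?I" if "a \<in> ?I" for c a
      using that H by (auto simp flip: hom(2))
    have bm: "bmul B s a \<in> ?I \<and> bmul B a s \<in> ?I" if sF: "s \<in> fiberE B x0" and aI: "a \<in> ?I" for s a
    proof -
      obtain j where j: "j \<in> J" "a = ?iv j" using aI by auto
      have "bmul B s a = ?iv (tmul B (?ph s) j)" "bmul B a s = ?iv (tmul B j (?ph s))"
        using sfib[OF sF] j by (metis hom(3))+
      then show ?thesis using H j(1) by auto
    qed
    show "bmul B s a \<in> ?I" if "s \<in> fiberE B x0" "a \<in> ?I" for s a using bm that by blast
    show "bmul B a s \<in> ?I" if "s \<in> fiberE B x0" "a \<in> ?I" for s a using bm that by blast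
  qed
  have fn: "fib_nilpotent B x0 ?I" unfolding fib_nilpotent_def
  proof -
    obtain k where k: "k \<ge> 1" "\<forall>as. length as = k \<and> set as \<subseteq> J \<longrightarrow> foldr (tmul B) as (tone B) = 0"
      using H by blast
    have fold: "foldr (bmul B) (map ?iv js) (bone B x0) = ?iv (foldr (tmul B) js (tone B))" for js
      by (induction js) (simp_all add: hom)
    show "\<exists>k\<ge>1. \<forall>as. length as = k \<and> set as \<subseteq> ?I \<longrightarrow> foldr (bmul B) as (bone B x0) = bzero B x0"
    proof (intro exI[of _ k] conjI allI impI)
      fix as assume as: "length as = k \<and> set as \<subseteq> ?I"
      let ?js = "map ?ph as"
      have "?iv (?ph a) = a" if "a \<in> set as" for a using that as fib by auto
      then have "map ?iv ?js = as" by (induction as) auto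
      moreover have "set ?js \<subseteq> J" using as fib by auto
      ultimately show "foldr (bmul B) as (bone B x0) = bzero B x0"
        using fold[of ?js] k as hom(4) by (metis length_map)
    qed (rule k(1))
  qed
  have "?I = {bzero B x0}" using ss x0 fi fn unfolding semisimple_fibers_def by blast
  then show "J \<subseteq> {0}"
  proof (intro subsetI)
    fix j assume I: "?I = {bzero B x0}" and j: "j \<in> J"
    have "?iv j \<in> ?I" using j by (rule imageI)
    then have "?iv j = ?iv 0" using I hom(4) by simp
    then show "j \<in> {0}" using ivx_inj[OF x0] by blast
  qed
qed

lemma salgB:
  assumes "semisimple_fibers B" "x0 \<in> topspace (bbase B)"
  shows "salg (tmul B) (tone B)"
  using talgB ssimple_B[OF assms] by (simp add: salg_def salg_axioms_def)

lemma tcoord_e: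
  assumes "local_triv B W \<phi>" "x \<in> W" "salg (tmul B) (tone B)"
  shows "tcoord \<phi> (esec B x) = salg.Cm (tmul B)"
proof -
  note P = trans_props[OF assms(1,2)]
  have "tcoord \<phi> (map (\<lambda>(a, b). ((\<lambda>a. a) a, (\<lambda>a. a) b)) (esec B x)) =
      matrix (\<lambda>v. \<phi> (ivx B x v)) ** map_matrix (\<lambda>c. c) (salg.Cm (tmul B)) ** transpose (matrix (\<lambda>v. \<phi> (ivx B x v)))"
    by (rule tcoord_esec) (simp add: P(2))
  also have "\<dots> = salg.Cm (tmul B)"
    using salg.aut_C[OF assms(3) P(1) P(2) P(3) P(4)] by simp
  finally show ?thesis by simp
qed

end


context abund begin

lemma fsum_fiber:
  assumes x: "x \<in> topspace (bbase B)"
  shows "set l \<subseteq> fiberE B x \<Longrightarrow> fsum B x l \<in> fiberE B x \<and> phx B x (fsum B x l) = sum_list (map (phx B x) l)"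
proof (induction l)
  case Nil
  then show ?case using lt_alg(1,2)[OF triv_at_ok(2)[OF x] triv_at_ok(1)[OF x]] by (simp add: fsum_def)
next
  case (Cons a l)
  then have a: "a \<in> fiberE B x" and IH: "fsum B x l \<in> fiberE B x \<and> phx B x (fsum B x l) = sum_list (map (phx B x) l)"
    by auto
  have "fsum B x (a # l) = badd B a (fsum B x l)" by (simp add: fsum_def)
  then show ?case using lt_alg(5)[OF triv_at_ok(2)[OF x] triv_at_ok(1)[OF x] a] IH by simp
qed

lemma lin_alpha:
  assumes "local_triv B W \<phi>" "x \<in> W"
  shows "Vector_Spaces.linear (*s) (*s) (\<lambda>v. \<phi> (ivx B x v))"
  by (rule linear_vecI) (simp_all add: trans_props[OF assms])

lemma esec_fiber: "x \<in> topspace (bbase B) \<Longrightarrow> tensor_in B x (esec B x)"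
  unfolding tensor_in_def esec_def using ivx(1) by auto

lemma sep_at:
  assumes S: "salg (tmul B) (tone B)" and x: "x \<in> topspace (bbase B)"
  shows "sep_idempotent B x (esec B x)"
proof -
  interpret S: salg "tmul B" "tone B" by (rule S)
  have comm: "teq B x (map (\<lambda>(a, b). (bmul B mm a, b)) (esec B x)) (map (\<lambda>(a, b). (a, bmul B b mm)) (esec B x))"
    if mm: "mm \<in> fiberE B x" for mm
    unfolding teq_def
  proof (intro allI impI, elim conjE)
    fix W \<phi> assume lt: "local_triv B W \<phi>" and xW: "x \<in> W"
    note P = trans_props[OF lt xW]
    note A = lt_alg[OF lt xW]
    let ?a = "\<lambda>v. \<phi> (ivx B x v)" and ?y = "\<phi> mm"
    let ?A = "matrix ?a"
    have iv: "ivx B x v \<in> fiberE B x" for v using ivx(1)[OF x] .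
    have e1: "(\<lambda>v. \<phi> (bmul B mm (ivx B x v))) = tmul B ?y \<circ> ?a"
      using A(7)[OF mm iv] by (auto simp: fun_eq_iff)
    have e2: "(\<lambda>v. \<phi> (bmul B (ivx B x v) mm)) = (\<lambda>v. tmul B v ?y) \<circ> ?a"
      using A(7)[OF iv mm] by (auto simp: fun_eq_iff)
    have m1: "matrix (\<lambda>v. \<phi> (bmul B mm (ivx B x v))) = S.L ?y ** ?A"
      unfolding e1 S.L_def by (rule matrix_compose_gen[OF lin_alpha[OF lt xW] S.linR])
    have m2: "matrix (\<lambda>v. \<phi> (bmul B (ivx B x v) mm)) = S.Rm ?y ** ?A"
      unfolding e2 S.Rm_def by (rule matrix_compose_gen[OF lin_alpha[OF lt xW] S.linL])
    have sm1: "\<phi> (bmul B mm (ivx B x (c *s v))) = c *s \<phi> (bmul B mm (ivx B x v))" for c v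
      using A(7)[OF mm iv] A(7)[OF mm iv[of "c *s v"]] P(2) by (simp add: S.smR)
    have sm2: "\<phi> (ivx B x (c *s v)) = c *s \<phi> (ivx B x v)" for c v by (rule P(2))
    have inv: "?A ** S.Cm ** transpose ?A = S.Cm" by (rule S.aut_C[OF P(1) P(2) P(3) P(4)])
    have "tcoord \<phi> (map (\<lambda>(a, b). (bmul B mm a, (\<lambda>a. a) b)) (esec B x)) =
        matrix (\<lambda>v. \<phi> (bmul B mm (ivx B x v))) ** map_matrix (\<lambda>c. c) S.Cm ** transpose ?A"
      by (rule tcoord_esec) (use sm1 in simp)
    also have "\<dots> = S.L ?y ** (?A ** S.Cm ** transpose ?A)" by (simp add: m1 matrix_mul_assoc)
    also have "\<dots> = S.Cm ** transpose (S.Rm ?y)" by (simp add: inv S.comm)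
    also have "\<dots> = (?A ** S.Cm ** transpose ?A) ** transpose (S.Rm ?y)" by (simp add: inv)
    also have "\<dots> = ?A ** map_matrix (\<lambda>c. c) S.Cm ** transpose (matrix (\<lambda>v. \<phi> (bmul B (ivx B x v) mm)))"
      by (simp add: m2 matrix_transpose_mul matrix_mul_assoc)
    also have "\<dots> = tcoord \<phi> (map (\<lambda>(a, b). ((\<lambda>a. a) a, bmul B b mm)) (esec B x))"
      by (rule tcoord_esec[symmetric]) (use sm2 in simp)
    finally show "tcoord \<phi> (map (\<lambda>(a, b). (bmul B mm a, b)) (esec B x)) =
        tcoord \<phi> (map (\<lambda>(a, b). (a, bmul B b mm)) (esec B x))" by simp
  qed
  have fs: "fsum B x (map (\<lambda>(a, b). bmul B a b) (esec B x)) = bone B x"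
  proof -
    let ?l = "map (\<lambda>(a, b). bmul B a b) (esec B x)"
    note T = triv_at_ok[OF x]
    note A = lt_alg[OF T(2) T(1)]
    have iv: "ivx B x v \<in> fiberE B x" "phx B x (ivx B x v) = v" for v using ivx[OF x] by auto
    have "set ?l \<subseteq> fiberE B x" unfolding esec_def using A(7)[OF iv(1) iv(1)] by auto
    note F = fsum_fiber[OF x this]
    have "phx B x (fsum B x ?l) = sum_list (map (phx B x) ?l)" using F by simp
    also have "\<dots> = sum_list (map (\<lambda>(k, l). tmul B (S.Cm $ k $ l *s axis k 1) (axis l 1)) allpairs)"
      unfolding esec_def map_map using A(7)[OF iv(1) iv(1)] iv(2) by (simp add: o_def split_def)
    also have "\<dots> = (\<Sum>(k, l)\<in>UNIV. tmul B (S.Cm $ k $ l *s axis k 1) (axis l 1))"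
      by (simp add: sum_list_distinct_conv_sum_set allpairs)
    also have "\<dots> = S.muE"
      unfolding S.muE_def by (simp add: sum.cartesian_product UNIV_Times_UNIV[symmetric] S.smL del: UNIV_Times_UNIV)
    also have "\<dots> = tone B" by (rule S.muE_one)
    finally have "phx B x (fsum B x ?l) = tone B" .
    then show ?thesis using ivx_phx[OF x, of "fsum B x ?l"] F ivx_hom(5)[OF x] by simp
  qed
  show ?thesis unfolding sep_idempotent_def using esec_fiber[OF x] comm fs by blast
qed

end


context abund begin

lemma cont_e:
  assumes SA: "\<And>x. x \<in> topspace (bbase B) \<Longrightarrow> salg (tmul B) (tone B)"
  shows "cont_tensor_section B (esec B)"
  unfolding cont_tensor_section_def
proof (intro allI impI)
  fix W \<phi> assume lt: "local_triv B W \<phi>"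
  have "continuous_map (subtopology (bbase B) W) euclidean (\<lambda>x. salg.Cm (tmul B))" by simp
  then show "continuous_map (subtopology (bbase B) W) euclidean (\<lambda>x. tcoord \<phi> (esec B x))"
  proof (rule continuous_map_eq)
    fix x assume "x \<in> topspace (subtopology (bbase B) W)"
    then have x: "x \<in> topspace (bbase B)" "x \<in> W" by auto
    show "salg.Cm (tmul B) = tcoord \<phi> (esec B x)" using tcoord_e[OF lt x(2) SA[OF x(1)]] by simp
  qed
qed

lemma inv_e:
  assumes S: "salg (tmul B) (tone B)" and grp: "topological_group G" and act: "bundle_action G B"
  shows "invariant_tensor_section G B (esec B)"
  unfolding invariant_tensor_section_def
proof (intro ballI)
  fix g x assume g: "g \<in> topspace (gtop G)" and x: "x \<in> topspace (bbase B)"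
  interpret S: salg "tmul B" "tone B" by (rule S)
  let ?y = "bactX B g x"
  have y: "?y \<in> topspace (bbase B)" using act g x unfolding bundle_action_def by blast
  have actf: "bactE B g a \<in> fiberE B ?y" if "a \<in> fiberE B x" for a
    using act g x that unfolding bundle_action_def fiberE_def by auto
  have act_hom: "bactE B g (badd B a b) = badd B (bactE B g a) (bactE B g b)"
        "bactE B g (bsmult B c a) = bsmult B c (bactE B g a)"
        "bactE B g (bmul B a b) = bmul B (bactE B g a) (bactE B g b)"
    if "a \<in> fiberE B x" "b \<in> fiberE B x" for a b c
    using act g x that unfolding bundle_action_def by blast+
  have gi: "ginv G g \<in> topspace (gtop G)" "gmul G (ginv G g) g = gone G"
    using grp g unfolding topological_group_def by auto
  have bkw: "bactE B (ginv G g) (bactE B g z) = z" if "z \<in> fiberE B x" for z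
  proof -
    have z: "z \<in> topspace (btotal B)" using that by (simp add: fiberE_def)
    have "bactE B (gmul G (ginv G g) g) z = bactE B (ginv G g) (bactE B g z)"
      using act gi(1) g z unfolding bundle_action_def by blast
    moreover have "bactE B (gone G) z = z" using act z unfolding bundle_action_def by blast
    ultimately show ?thesis using gi(2) by simp
  qed
  show "teq B ?y (map (\<lambda>(a, b). (bactE B g a, bactE B g b)) (esec B x)) (esec B ?y)"
    unfolding teq_def
  proof (intro allI impI, elim conjE)
    fix W \<phi> assume lt: "local_triv B W \<phi>" and yW: "?y \<in> W"
    note A = lt_alg[OF lt yW]
    let ?g = "\<lambda>v. \<phi> (bactE B g (ivx B x v))"
    have iv: "ivx B x v \<in> fiberE B x" for v using ivx(1)[OF x] .
    have add: "?g (v + w) = ?g v + ?g w" for v w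
      using A(5)[OF actf[OF iv] actf[OF iv]] by (simp add: ivx_hom[OF x] act_hom[OF iv iv])
    have sm: "?g (c *s v) = c *s ?g v" for c v
      using A(6)[OF actf[OF iv]] by (simp add: ivx_hom[OF x] act_hom[OF iv iv])
    have mul: "?g (tmul B v w) = tmul B (?g v) (?g w)" for v w
      using A(7)[OF actf[OF iv] actf[OF iv]] by (simp add: ivx_hom[OF x] act_hom[OF iv iv])
    have inj: "inj ?g"
    proof (rule injI)
      fix v w assume "?g v = ?g w"
      then have "bactE B g (ivx B x v) = bactE B g (ivx B x w)"
        using inj_onD[OF lt_fiber(1)[OF lt yW]] actf[OF iv] by metis
      then have "ivx B x v = ivx B x w" using bkw iv by metis
      then show "v = w" by (rule ivx_inj[OF x])
    qed
    have "tcoord \<phi> (map (\<lambda>(a, b). (bactE B g a, bactE B g b)) (esec B x)) =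
       matrix ?g ** map_matrix (\<lambda>c. c) S.Cm ** transpose (matrix ?g)"
      by (rule tcoord_esec) (use sm in simp)
    also have "\<dots> = S.Cm" using S.aut_C[OF add sm mul inj] by simp
    also have "\<dots> = tcoord \<phi> (esec B ?y)" using tcoord_e[OF lt yW S] by simp
    finally show "tcoord \<phi> (map (\<lambda>(a, b). (bactE B g a, bactE B g b)) (esec B x)) = tcoord \<phi> (esec B ?y)" .
  qed
qed

lemma star_e:
  assumes S: "salg (tmul B) (tone B)" and cj: "cjhom cj" and st: "star_bundle_U cj G B st"
  shows "star_flip_section B st (esec B)"
  unfolding star_flip_section_def
proof (intro ballI)
  fix x assume x: "x \<in> topspace (bbase B)"
  interpret S: salg "tmul B" "tone B" by (rule S)
  have stp: "st a \<in> fiberE B x" "st (st a) = a" "st (badd B a b) = badd B (st a) (st b)"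
     "st (bsmult B c a) = bsmult B (cj c) (st a)" "st (bmul B a b) = bmul B (st b) (st a)"
    if "a \<in> fiberE B x" "b \<in> fiberE B x" for a b c
    using st x that unfolding star_bundle_U_def by blast+
  show "teq B x (map (\<lambda>(a, b). (st a, st b)) (esec B x)) (map (\<lambda>(a, b). (b, a)) (esec B x))"
    unfolding teq_def
  proof (intro allI impI, elim conjE)
    fix W \<phi> assume lt: "local_triv B W \<phi>" and xW: "x \<in> W"
    note A = lt_alg[OF lt xW]
    let ?g = "\<lambda>v. \<phi> (st (ivx B x v))"
    have iv: "ivx B x v \<in> fiberE B x" for v using ivx(1)[OF x] .
    have add: "?g (v + w) = ?g v + ?g w" for v w
      using A(5)[OF stp(1)[OF iv iv] stp(1)[OF iv iv]] by (simp add: ivx_hom[OF x] stp(3)[OF iv iv])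
    have sm: "?g (c *s v) = cj c *s ?g v" for c v
      using A(6)[OF stp(1)[OF iv iv]] by (simp add: ivx_hom[OF x] stp(4)[OF iv iv])
    have anti: "?g (tmul B v w) = tmul B (?g w) (?g v)" for v w
      using A(7)[OF stp(1)[OF iv iv] stp(1)[OF iv iv]] by (simp add: ivx_hom[OF x] stp(5)[OF iv iv])
    have inj: "inj ?g"
    proof (rule injI)
      fix v w assume "?g v = ?g w"
      then have "st (ivx B x v) = st (ivx B x w)"
        using inj_onD[OF lt_fiber(1)[OF lt xW]] stp(1)[OF iv iv] by metis
      then have "ivx B x v = ivx B x w" using stp(2)[OF iv iv] by metis
      then show "v = w" by (rule ivx_inj[OF x])
    qed
    have "tcoord \<phi> (map (\<lambda>(a, b). (st a, st b)) (esec B x)) =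
       matrix ?g ** map_matrix cj S.Cm ** transpose (matrix ?g)"
      by (rule tcoord_esec) (use sm in simp)
    also have "\<dots> = S.Cm" by (rule S.anti_C[OF cj add sm anti inj])
    also have "\<dots> = transpose (tcoord \<phi> (esec B x))" using tcoord_e[OF lt xW S] S.Cm_sym by simp
    also have "\<dots> = tcoord \<phi> (map (\<lambda>(a, b). (b, a)) (esec B x))" by (rule tcoord_swap[symmetric])
    finally show "tcoord \<phi> (map (\<lambda>(a, b). (st a, st b)) (esec B x)) = tcoord \<phi> (map (\<lambda>(a, b). (b, a)) (esec B x))" .
  qed
qed

end

lemma main_part:
  fixes G :: "'g tgroup" and B :: "('g, 'x, 'e, 'k::real_normed_field, 'n::finite) algbundle"
  assumes Lie: "compact_Lie_group G" and AB: "alg_bundle_U G B" and ss: "semisimple_fibers B"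
  shows "sep_section G B (esec B)"
    and "cjhom cj \<Longrightarrow> star_bundle_U cj G B st \<Longrightarrow> star_flip_section B st (esec B)"
proof -
  have lt: "loc_triv_alg_bundle B" and act: "bundle_action G B" using AB by (auto simp: alg_bundle_U_def)
  have grp: "topological_group G" using Lie by (simp add: compact_Lie_group_def)
  interpret abund B by (rule abund.intro[OF lt])
  have SA: "salg (tmul B) (tone B)" if "x \<in> topspace (bbase B)" for x by (rule salgB[OF ss that])
  show "sep_section G B (esec B)" unfolding sep_section_def
  proof (intro conjI ballI)
    show "cont_tensor_section B (esec B)" by (rule cont_e) (rule SA)
    show "invariant_tensor_section G B (esec B)"
    proof (cases "topspace (bbase B) = {}")
      case True then show ?thesis by (simp add: invariant_tensor_section_def)
    next
      case False then obtain x0 where "x0 \<in> topspace (bbase B)" by blast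
      then show ?thesis by (rule inv_e[OF SA grp act])
    qed
    show "sep_idempotent B x (esec B x)" if "x \<in> topspace (bbase B)" for x
      by (rule sep_at[OF SA[OF that] that])
  qed
  show "star_flip_section B st (esec B)" if cj: "cjhom cj" and st: "star_bundle_U cj G B st"
  proof (cases "topspace (bbase B) = {}")
    case True then show ?thesis by (simp add: star_flip_section_def)
  next
    case False then obtain x0 where "x0 \<in> topspace (bbase B)" by blast
    then show ?thesis by (rule star_e[OF SA cj st])
  qed
qed

theorem mainTheorem4:
  fixes GR :: "'g tgroup" and BR :: "('g, 'x, 'e, real, 'n::finite) algbundle" and stR :: "'e \<Rightarrow> 'e"
    and GC :: "'h tgroup" and BC :: "('h, 'y, 'f, complex, 'm::finite) algbundle" and stC :: "'f \<Rightarrow> 'f"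
  shows
    "(compact_Lie_group GR \<and> Hausdorff_space (bbase BR) \<and> paracompact_space (bbase BR) \<and>
      alg_bundle_U GR BR \<and> semisimple_fibers BR \<longrightarrow>
        (\<exists>e. sep_section GR BR e) \<and>
        (star_bundle_U (\<lambda>c. c) GR BR stR \<longrightarrow>
           (\<exists>e. sep_section GR BR e \<and> star_flip_section BR stR e)))
     \<and>
     (compact_Lie_group GC \<and> Hausdorff_space (bbase BC) \<and> paracompact_space (bbase BC) \<and>
      alg_bundle_U GC BC \<and> semisimple_fibers BC \<longrightarrow>
        (\<exists>e. sep_section GC BC e) \<and>
        (star_bundle_U cnj GC BC stC \<longrightarrow>
           (\<exists>e. sep_section GC BC e \<and> star_flip_section BC stC e)))"
proof (intro conjI impI)
  assume H: "compact_Lie_group GR \<and> Hausdorff_space (bbase BR) \<and> paracompact_space (bbase BR) \<and>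
      alg_bundle_U GR BR \<and> semisimple_fibers BR"
  note P = main_part[of GR BR]
  show "\<exists>e. sep_section GR BR e" using P(1) H by blast
  show "\<exists>e. sep_section GR BR e \<and> star_flip_section BR stR e" if "star_bundle_U (\<lambda>c. c) GR BR stR"
    using P H that cjhom_id by blast
next
  assume H: "compact_Lie_group GC \<and> Hausdorff_space (bbase BC) \<and> paracompact_space (bbase BC) \<and>
      alg_bundle_U GC BC \<and> semisimple_fibers BC"
  note P = main_part[of GC BC]
  show "\<exists>e. sep_section GC BC e" using P(1) H by blast
  show "\<exists>e. sep_section GC BC e \<and> star_flip_section BC stC e" if "star_bundle_U cnj GC BC stC"
    using P H that cjhom_cnj by blast
qed


end
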